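(* Let $n\geq 2$ and let $\Lambda=(\lambda_1,\ldots,\lambda_n)$ be complex numbers with $0<|\lambda_n|\leq\cdots\leq|\lambda_1|<1$. Then the primary Hopf manifold $M_\Lambda$ of type $\Lambda$ supports a l.c.K. metric (Hermitian with respect to its complex structure) with parallel Lee form.
   Context: The primary Hopf manifold $M_\Lambda$ of type $\Lambda$ is the compact complex manifold $(\mathbb{C}^n\setminus\{0\})/\Gamma_\Lambda$, where $\Gamma_\Lambda$ is the infinite cyclic group generated by $(z_1,\ldots,z_n)\mapsto(\lambda_1z_1,\ldots,\lambda_nz_n)$, with complex structure induced from $\mathbb{C}^n$. A Hermitian metric $g$ with fundamental form $\omega(X,Y)=g(X,JY)$ is l.c.K. if $d\omega=\theta\wedge\omega$ for a closed $1$-form $\theta$ (the Lee form); the Lee form is parallel if $\nabla^g\theta=0$. *)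

theory Defs
  imports "HOL-Analysis.Analysis"
begin

text \<open>Tensor fields on the open set C^n - {0} are written with respect to constant
  vector fields; a tensor field on the Hopf manifold is the same as a tensor field
  on C^n - {0} invariant under the generator of Gamma.\<close>

fun dd :: "('v::real_normed_vector \<Rightarrow> real) \<Rightarrow> 'v list \<Rightarrow> 'v \<Rightarrow> real" where
  "dd f [] = f"
| "dd f (v # vs) = (\<lambda>p. frechet_derivative (dd f vs) (at p) v)"

definition smooth_on :: "'v::real_normed_vector set \<Rightarrow> ('v \<Rightarrow> real) \<Rightarrow> bool" where
  "smooth_on U f \<longleftrightarrow> (\<forall>vs. continuous_on U (dd f vs) \<and> (\<forall>p\<in>U. dd f vs differentiable (at p)))"

definition D :: "('v::real_normed_vector \<Rightarrow> real) \<Rightarrow> 'v \<Rightarrow> 'v \<Rightarrow> real" where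
  "D f p X = frechet_derivative f (at p) X"

definition Jc :: "complex^'n \<Rightarrow> complex^'n" where
  "Jc v = (\<chi> i. \<i> * v $ i)"

definition hopf_gen :: "complex^'n \<Rightarrow> complex^'n \<Rightarrow> complex^'n" where
  "hopf_gen lam z = (\<chi> i. lam $ i * z $ i)"

definition punctured :: "(complex^'n) set" where
  "punctured = - {0}"

definition hermitian_metric_hopf ::
  "complex^'n \<Rightarrow> (complex^'n \<Rightarrow> complex^'n \<Rightarrow> complex^'n \<Rightarrow> real) \<Rightarrow> bool" where
  "hermitian_metric_hopf lam g \<longleftrightarrow>
     (\<forall>p\<in>punctured. bilinear (g p) \<and> (\<forall>v w. g p v w = g p w v) \<and> (\<forall>v. v \<noteq> 0 \<longrightarrow> g p v v > 0)
        \<and> (\<forall>v w. g p (Jc v) (Jc w) = g p v w)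
        \<and> (\<forall>v w. g (hopf_gen lam p) (hopf_gen lam v) (hopf_gen lam w) = g p v w))
   \<and> (\<forall>v w. smooth_on punctured (\<lambda>p. g p v w))"

definition one_form_hopf ::
  "complex^'n \<Rightarrow> (complex^'n \<Rightarrow> complex^'n \<Rightarrow> real) \<Rightarrow> bool" where
  "one_form_hopf lam \<theta> \<longleftrightarrow>
     (\<forall>p\<in>punctured. linear (\<theta> p) \<and> (\<forall>v. \<theta> (hopf_gen lam p) (hopf_gen lam v) = \<theta> p v))
   \<and> (\<forall>v. smooth_on punctured (\<lambda>p. \<theta> p v))"

definition fund_form :: "(complex^'n \<Rightarrow> complex^'n \<Rightarrow> complex^'n \<Rightarrow> real) \<Rightarrow> complex^'n \<Rightarrow> complex^'n \<Rightarrow> complex^'n \<Rightarrow> real" where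
  "fund_form g p X Y = g p X (Jc Y)"

definition closed_form where
  "closed_form \<theta> \<longleftrightarrow> (\<forall>p\<in>punctured. \<forall>X Y. D (\<lambda>q. \<theta> q Y) p X - D (\<lambda>q. \<theta> q X) p Y = 0)"

text \<open>d omega = theta wedge omega, evaluated on constant vector fields X Y Z.\<close>
definition lck_equation where
  "lck_equation g \<theta> \<longleftrightarrow> (\<forall>p\<in>punctured. \<forall>X Y Z.
      D (\<lambda>q. fund_form g q Y Z) p X - D (\<lambda>q. fund_form g q X Z) p Y + D (\<lambda>q. fund_form g q X Y) p Z
    = \<theta> p X * fund_form g p Y Z - \<theta> p Y * fund_form g p X Z + \<theta> p Z * fund_form g p X Y)"

text \<open>Levi-Civita connection on constant fields via the Koszul formula:
  N is nabla_X Y at p iff 2 g(N,Z) = X g(Y,Z) + Y g(X,Z) - Z g(X,Y) for all Z.\<close>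
definition levi_civita_at where
  "levi_civita_at g p X Y N \<longleftrightarrow> (\<forall>Z. 2 * g p N Z =
      D (\<lambda>q. g q Y Z) p X + D (\<lambda>q. g q X Z) p Y - D (\<lambda>q. g q X Y) p Z)"

definition parallel_form where
  "parallel_form g \<theta> \<longleftrightarrow> (\<forall>p\<in>punctured. \<forall>X Y N. levi_civita_at g p X Y N \<longrightarrow>
      D (\<lambda>q. \<theta> q Y) p X - \<theta> p N = 0)"

definition lck_metric_parallel_lee_on_hopf :: "complex^'n \<Rightarrow> bool" where
  "lck_metric_parallel_lee_on_hopf lam \<longleftrightarrow>
     (\<exists>g \<theta>. hermitian_metric_hopf lam g \<and> one_form_hopf lam \<theta> \<and> closed_form \<theta>
        \<and> lck_equation g \<theta> \<and> parallel_form g \<theta>)"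

end

theory Submission
  imports Defs "HOL-Analysis.Analysis"
begin

lemma dd_append: "dd f (ws @ vs) = dd (dd f vs) ws"
  by (induction ws) auto

lemma fd_local:
  assumes "open U" "x \<in> U" "\<And>y. y \<in> U \<Longrightarrow> f y = g y"
  shows "frechet_derivative f (at x) = frechet_derivative g (at x)"
proof -
  have "(\<lambda>f'. (f has_derivative f') (at x)) = (\<lambda>f'. (g has_derivative f') (at x))"
  proof (intro ext iffI)
    fix f' assume "(f has_derivative f') (at x)"
    then show "(g has_derivative f') (at x)"
      using has_derivative_transform_within_open[OF _ assms(1,2), of f f' UNIV g] assms(3) by simp
  next
    fix f' assume "(g has_derivative f') (at x)"
    then show "(f has_derivative f') (at x)"
      using has_derivative_transform_within_open[OF _ assms(1,2), of g f' UNIV f] assms(3) by simp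
  qed
  then show ?thesis unfolding frechet_derivative_def by simp
qed

lemma dd_local:
  assumes "open U" "\<And>y. y \<in> U \<Longrightarrow> f y = g y" "q \<in> U"
  shows "dd f vs q = dd g vs q"
  using assms(3)
proof (induction vs arbitrary: q)
  case Nil then show ?case using assms by simp
next
  case (Cons v vs)
  then show ?case using fd_local[OF assms(1) Cons.prems, of "dd f vs" "dd g vs"] by simp
qed

lemma differentiable_local:
  assumes "open U" "\<And>y. y \<in> U \<Longrightarrow> f y = g y" "q \<in> U" "f differentiable (at q)"
  shows "g differentiable (at q)"
  using assms has_derivative_transform_within_open[OF _ assms(1,3), of f _ UNIV g] unfolding differentiable_def by blast

inductive_set KS :: "'v::real_normed_vector set \<Rightarrow> ('v \<Rightarrow> real) set \<Rightarrow> ('v \<Rightarrow> real) set"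
  for U B where
  const: "(\<lambda>p. c) \<in> KS U B"
| lin: "bounded_linear l \<Longrightarrow> l \<in> KS U B"
| atom: "b \<in> B \<Longrightarrow> b \<in> KS U B"
| add: "f \<in> KS U B \<Longrightarrow> g \<in> KS U B \<Longrightarrow> (\<lambda>p. f p + g p) \<in> KS U B"
| mult: "f \<in> KS U B \<Longrightarrow> g \<in> KS U B \<Longrightarrow> (\<lambda>p. f p * g p) \<in> KS U B"
| pow: "f \<in> KS U B \<Longrightarrow> (\<forall>p\<in>U. 0 < f p) \<Longrightarrow> (\<lambda>p. f p powr a) \<in> KS U B"
| loc: "f \<in> KS U B \<Longrightarrow> (\<forall>p\<in>U. f p = g p) \<Longrightarrow> g \<in> KS U B"

lemma KS_sum:
  assumes "finite S" "\<And>j. j \<in> S \<Longrightarrow> f j \<in> KS U B"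
  shows "(\<lambda>p. \<Sum>j\<in>S. f j p) \<in> KS U B"
  using assms
proof (induction S rule: finite_induct)
  case empty then show ?case using KS.const[of 0] by simp
next
  case (insert x F) then show ?case using KS.add[of "f x" U B "\<lambda>p. \<Sum>j\<in>F. f j p"] by simp
qed

lemma KS_scale: "f \<in> KS U B \<Longrightarrow> (\<lambda>p. c * f p) \<in> KS U B"
  using KS.mult[OF KS.const] .

lemma KS_minus: "f \<in> KS U B \<Longrightarrow> g \<in> KS U B \<Longrightarrow> (\<lambda>p. f p - g p) \<in> KS U B"
  using KS.add[of f U B "\<lambda>p. (-1) * g p"] KS_scale[of g U B "-1"] by simp

lemma KS_divide: "f \<in> KS U B \<Longrightarrow> g \<in> KS U B \<Longrightarrow> (\<forall>p\<in>U. 0 < g p) \<Longrightarrow> (\<lambda>p. f p / g p) \<in> KS U B"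
proof -
  assume a: "f \<in> KS U B" "g \<in> KS U B" "\<forall>p\<in>U. 0 < g p"
  have "(\<lambda>p. f p * g p powr (-1)) \<in> KS U B" using KS.mult[OF a(1) KS.pow[OF a(2,3)]] .
  moreover have "\<forall>p\<in>U. f p * g p powr (-1) = f p / g p" using a(3)
    by (auto simp: powr_minus divide_inverse less_imp_le)
  ultimately show ?thesis by (rule KS.loc)
qed

definition good :: "'v::real_normed_vector set \<Rightarrow> ('v \<Rightarrow> real) set \<Rightarrow> ('v \<Rightarrow> real) \<Rightarrow> bool" where
  "good U B f \<longleftrightarrow> (\<forall>p\<in>U. f differentiable (at p)) \<and>
     (\<forall>v. \<exists>h\<in>KS U B. \<forall>p\<in>U. frechet_derivative f (at p) v = h p)"

lemma good_diff: "good U B f \<Longrightarrow> p \<in> U \<Longrightarrow> (f has_derivative frechet_derivative f (at p)) (at p)"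
  unfolding good_def using frechet_derivative_works by blast

lemma KS_good:
  assumes U: "open U" and atoms: "\<And>b. b\<in>B \<Longrightarrow> good U B b" and f: "f \<in> KS U B"
  shows "good U B f"
  using f
proof induction
  case (const c)
  show ?case unfolding good_def
  proof (intro conjI allI ballI)
    fix p show "(\<lambda>p. c) differentiable at p" by simp
  next
    fix v show "\<exists>h\<in>KS U B. \<forall>p\<in>U. frechet_derivative (\<lambda>p. c) (at p) v = h p"
      by (intro bexI[OF _ KS.const[of 0]]) simp
  qed
next
  case (lin l)
  have d: "\<And>p. (l has_derivative l) (at p)" using lin bounded_linear_imp_has_derivative by blast
  show ?case unfolding good_def
  proof (intro conjI allI ballI)
    fix p show "l differentiable at p" using d unfolding differentiable_def by blast
  next
    fix v show "\<exists>h\<in>KS U B. \<forall>p\<in>U. frechet_derivative l (at p) v = h p"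
      by (intro bexI[OF _ KS.const[of "l v"]]) (simp add: frechet_derivative_at[OF d, symmetric])
  qed
next
  case (atom b) then show ?case using atoms by blast
next
  case (add f g)
  show ?case unfolding good_def
  proof (intro conjI allI ballI)
    fix p assume "p \<in> U"
    then show "(\<lambda>p. f p + g p) differentiable at p" using add.IH unfolding good_def by auto
  next
    fix v
    obtain hf where hf: "hf \<in> KS U B" "\<forall>p\<in>U. frechet_derivative f (at p) v = hf p" using add.IH unfolding good_def by blast
    obtain hg where hg: "hg \<in> KS U B" "\<forall>p\<in>U. frechet_derivative g (at p) v = hg p" using add.IH unfolding good_def by blast
    have "\<forall>p\<in>U. frechet_derivative (\<lambda>p. f p + g p) (at p) v = hf p + hg p"
    proof
      fix p assume p: "p \<in> U"
      have "((\<lambda>p. f p + g p) has_derivative (\<lambda>h. frechet_derivative f (at p) h + frechet_derivative g (at p) h)) (at p)"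
        using good_diff[OF add.IH(1) p] good_diff[OF add.IH(2) p] by (rule has_derivative_add)
      then show "frechet_derivative (\<lambda>p. f p + g p) (at p) v = hf p + hg p"
        using hf hg p by (simp add: frechet_derivative_at[symmetric])
    qed
    then show "\<exists>h\<in>KS U B. \<forall>p\<in>U. frechet_derivative (\<lambda>p. f p + g p) (at p) v = h p"
      using KS.add[OF hf(1) hg(1)] by (intro bexI[where x="\<lambda>p. hf p + hg p"]) auto
  qed
next
  case (mult f g)
  show ?case unfolding good_def
  proof (intro conjI allI ballI)
    fix p assume "p \<in> U"
    then show "(\<lambda>p. f p * g p) differentiable at p" using mult.IH unfolding good_def by auto
  next
    fix v
    obtain hf where hf: "hf \<in> KS U B" "\<forall>p\<in>U. frechet_derivative f (at p) v = hf p" using mult.IH unfolding good_def by blast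
    obtain hg where hg: "hg \<in> KS U B" "\<forall>p\<in>U. frechet_derivative g (at p) v = hg p" using mult.IH unfolding good_def by blast
    have "\<forall>p\<in>U. frechet_derivative (\<lambda>p. f p * g p) (at p) v = f p * hg p + hf p * g p"
    proof
      fix p assume p: "p \<in> U"
      have "((\<lambda>p. f p * g p) has_derivative (\<lambda>h. f p * frechet_derivative g (at p) h + frechet_derivative f (at p) h * g p)) (at p)"
        using good_diff[OF mult.IH(1) p] good_diff[OF mult.IH(2) p] by (rule has_derivative_mult)
      then show "frechet_derivative (\<lambda>p. f p * g p) (at p) v = f p * hg p + hf p * g p"
        using hf hg p by (simp add: frechet_derivative_at[symmetric])
    qed
    then show "\<exists>h\<in>KS U B. \<forall>p\<in>U. frechet_derivative (\<lambda>p. f p * g p) (at p) v = h p"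
      using KS.add[OF KS.mult[OF mult.hyps(1) hg(1)] KS.mult[OF hf(1) mult.hyps(2)]]
      by (intro bexI[where x="\<lambda>p. f p * hg p + hf p * g p"]) auto
  qed
next
  case (pow f a)
  have dpow: "((\<lambda>p. f p powr a) has_derivative (\<lambda>h. a * frechet_derivative f (at p) h * f p powr (a - 1))) (at p)"
    if p: "p \<in> U" for p
  proof -
    have "((\<lambda>p. f p powr a) has_derivative (\<lambda>h. (f p powr a) * (0 * ln (f p) + frechet_derivative f (at p) h * a / f p))) (at p)"
      using good_diff[OF pow.IH p] has_derivative_const[of a] pow.hyps(2) p
      by (intro has_derivative_powr) auto
    moreover have "f p powr (a - 1) = f p powr a / f p" using pow.hyps(2) p by (auto simp: powr_diff less_imp_le)
    ultimately show ?thesis by (simp add: field_simps)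
  qed
  show ?case unfolding good_def
  proof (intro conjI allI ballI)
    fix p assume "p \<in> U"
    then show "(\<lambda>p. f p powr a) differentiable at p" using dpow unfolding differentiable_def by blast
  next
    fix v
    obtain hf where hf: "hf \<in> KS U B" "\<forall>p\<in>U. frechet_derivative f (at p) v = hf p" using pow.IH unfolding good_def by blast
    have "\<forall>p\<in>U. frechet_derivative (\<lambda>p. f p powr a) (at p) v = a * hf p * f p powr (a - 1)"
      using hf by (auto simp add: frechet_derivative_at[OF dpow, symmetric])
    then show "\<exists>h\<in>KS U B. \<forall>p\<in>U. frechet_derivative (\<lambda>p. f p powr a) (at p) v = h p"
      using KS.mult[OF KS_scale[OF hf(1)] KS.pow[OF pow.hyps(1,2)]]
      by (intro bexI[where x="\<lambda>p. a * hf p * f p powr (a - 1)"]) auto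
  qed
next
  case (loc f g)
  show ?case unfolding good_def
  proof (intro conjI allI ballI)
    fix p assume "p \<in> U"
    then show "g differentiable at p" using loc differentiable_local[OF U, of f g p] unfolding good_def by auto
  next
    fix v
    obtain hf where hf: "hf \<in> KS U B" "\<forall>p\<in>U. frechet_derivative f (at p) v = hf p" using loc.IH unfolding good_def by blast
    then show "\<exists>h\<in>KS U B. \<forall>p\<in>U. frechet_derivative g (at p) v = h p"
      using fd_local[OF U, of _ f g] loc.hyps(2) by auto
  qed
qed

lemma KS_dd:
  assumes U: "open U" and atoms: "\<And>b. b\<in>B \<Longrightarrow> good U B b" and f: "f \<in> KS U B"
  shows "\<exists>h\<in>KS U B. \<forall>p\<in>U. dd f vs p = h p"
proof (induction vs)
  case Nil then show ?case using f by auto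
next
  case (Cons v vs)
  then obtain h where h: "h \<in> KS U B" "\<forall>p\<in>U. dd f vs p = h p" by blast
  obtain h' where h': "h' \<in> KS U B" "\<forall>p\<in>U. frechet_derivative h (at p) v = h' p"
    using KS_good[OF U atoms h(1)] unfolding good_def by blast
  have "\<forall>p\<in>U. dd f (v # vs) p = h' p"
    using fd_local[OF U, of _ "dd f vs" h] h h' by auto
  then show ?case using h' by blast
qed

lemma KS_smooth:
  assumes U: "open U" and atoms: "\<And>b. b\<in>B \<Longrightarrow> good U B b" and f: "f \<in> KS U B"
  shows "smooth_on U f"
  unfolding smooth_on_def
proof (intro allI conjI ballI)
  fix vs
  obtain h where h: "h \<in> KS U B" "\<forall>p\<in>U. dd f vs p = h p" using KS_dd[OF assms] by blast
  have hd: "\<forall>p\<in>U. h differentiable (at p)" using KS_good[OF U atoms h(1)] unfolding good_def by blast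
  then have "continuous_on U h"
    by (meson differentiable_at_imp_differentiable_on differentiable_imp_continuous_on)
  then show "continuous_on U (dd f vs)" using h(2) continuous_on_cong by force
  fix p assume "p \<in> U"
  then show "dd f vs differentiable at p" using differentiable_local[OF U, of h "dd f vs" p] hd h(2) by auto
qed


lemma smooth_dd: "smooth_on U f \<Longrightarrow> smooth_on U (dd f vs)"
  unfolding smooth_on_def by (simp add: dd_append[symmetric])

lemma smooth_diff: "smooth_on U f \<Longrightarrow> p \<in> U \<Longrightarrow> dd f vs differentiable (at p)"
  unfolding smooth_on_def by blast

lemma smooth_diff0: "smooth_on U f \<Longrightarrow> p \<in> U \<Longrightarrow> f differentiable (at p)"
  using smooth_diff[of U f p "[]"] by simp

lemma smooth_cont: "smooth_on U f \<Longrightarrow> open U \<Longrightarrow> p \<in> U \<Longrightarrow> isCont (dd f vs) p"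
  unfolding smooth_on_def using continuous_on_eq_continuous_at by blast

lemma dd_linear1: "smooth_on U f \<Longrightarrow> p \<in> U \<Longrightarrow> linear (\<lambda>v. dd f (v # vs) p)"
  using linear_frechet_derivative[OF smooth_diff] by simp

lemma line_deriv:
  assumes "f differentiable (at (a + s *\<^sub>R X))"
  shows "((\<lambda>s. f (a + s *\<^sub>R X)) has_real_derivative (frechet_derivative f (at (a + s *\<^sub>R X)) X)) (at s)"
proof -
  let ?D = "frechet_derivative f (at (a + s *\<^sub>R X))"
  have f: "(f has_derivative ?D) (at (a + s *\<^sub>R X))" using assms frechet_derivative_works by blast
  have l: "((\<lambda>s. a + s *\<^sub>R X) has_derivative (\<lambda>t. t *\<^sub>R X)) (at s)"
    by (auto intro!: derivative_eq_intros)
  have "((\<lambda>s. f (a + s *\<^sub>R X)) has_derivative (\<lambda>t. ?D (t *\<^sub>R X))) (at s)"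
    using has_derivative_compose[OF l f] by (simp add: o_def)
  moreover have "(\<lambda>t. ?D (t *\<^sub>R X)) = (*) (?D X)"
    using linear_frechet_derivative[OF assms] by (auto simp: linear_scale mult.commute)
  ultimately show ?thesis unfolding has_field_derivative_def by simp
qed

lemma schwarz_core:
  fixes f :: "'v::real_normed_vector \<Rightarrow> real"
  assumes sm: "smooth_on U f" and h: "0 < h"
    and inU: "\<And>s t. 0 \<le> s \<Longrightarrow> s \<le> h \<Longrightarrow> 0 \<le> t \<Longrightarrow> t \<le> h \<Longrightarrow> p + s *\<^sub>R X + t *\<^sub>R Y \<in> U"
  shows "\<exists>\<xi> \<eta>. 0 < \<xi> \<and> \<xi> < h \<and> 0 < \<eta> \<and> \<eta> < h \<and>
     f (p + h *\<^sub>R X + h *\<^sub>R Y) - f (p + h *\<^sub>R X) - f (p + h *\<^sub>R Y) + f p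
       = h * h * dd f [Y, X] (p + \<xi> *\<^sub>R X + \<eta> *\<^sub>R Y)"
proof -
  define a where "a s = f (p + h *\<^sub>R Y + s *\<^sub>R X) - f (p + s *\<^sub>R X)" for s
  have da: "(a has_real_derivative (dd f [X] (p + h *\<^sub>R Y + s *\<^sub>R X) - dd f [X] (p + s *\<^sub>R X))) (at s)"
    if "0 \<le> s" "s \<le> h" for s
  proof -
    have u1: "p + h *\<^sub>R Y + s *\<^sub>R X \<in> U" using inU[of s h] that h by (simp add: add_ac)
    have u2: "p + s *\<^sub>R X \<in> U" using inU[of s 0] that h by simp
    show ?thesis unfolding a_def
      using DERIV_diff[OF line_deriv[OF smooth_diff0[OF sm u1]] line_deriv[OF smooth_diff0[OF sm u2]]]
      by simp
  qed
  obtain \<xi> where xi: "0 < \<xi>" "\<xi> < h" "a h - a 0 = (h - 0) * (dd f [X] (p + h *\<^sub>R Y + \<xi> *\<^sub>R X) - dd f [X] (p + \<xi> *\<^sub>R X))"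
    using MVT2[OF h, of a "\<lambda>s. dd f [X] (p + h *\<^sub>R Y + s *\<^sub>R X) - dd f [X] (p + s *\<^sub>R X)", OF da] by blast
  define b where "b t = dd f [X] (p + \<xi> *\<^sub>R X + t *\<^sub>R Y)" for t
  have db: "(b has_real_derivative (dd f [Y, X] (p + \<xi> *\<^sub>R X + t *\<^sub>R Y))) (at t)"
    if "0 \<le> t" "t \<le> h" for t
  proof -
    have u1: "p + \<xi> *\<^sub>R X + t *\<^sub>R Y \<in> U" using inU[of \<xi> t] that xi by simp
    show ?thesis unfolding b_def using line_deriv[OF smooth_diff[OF sm u1, of "[X]"]] by simp
  qed
  obtain \<eta> where eta: "0 < \<eta>" "\<eta> < h" "b h - b 0 = (h - 0) * dd f [Y, X] (p + \<xi> *\<^sub>R X + \<eta> *\<^sub>R Y)"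
    using MVT2[OF h, of b "\<lambda>t. dd f [Y, X] (p + \<xi> *\<^sub>R X + t *\<^sub>R Y)", OF db] by blast
  have bh: "b h - b 0 = dd f [X] (p + h *\<^sub>R Y + \<xi> *\<^sub>R X) - dd f [X] (p + \<xi> *\<^sub>R X)"
    unfolding b_def by (simp add: add_ac)
  have ah: "a h - a 0 = f (p + h *\<^sub>R X + h *\<^sub>R Y) - f (p + h *\<^sub>R X) - f (p + h *\<^sub>R Y) + f p"
    unfolding a_def by (simp add: add_ac)
  have "a h - a 0 = h * (b h - b 0)" using xi(3) bh by simp
  also have "\<dots> = h * h * dd f [Y, X] (p + \<xi> *\<^sub>R X + \<eta> *\<^sub>R Y)" using eta(3) by simp
  finally show ?thesis using xi eta ah by (intro exI[of _ \<xi>] exI[of _ \<eta>]) auto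
qed

lemma schwarz:
  fixes f :: "'v::real_normed_vector \<Rightarrow> real"
  assumes sm: "smooth_on U f" and U: "open U" and p: "p \<in> U"
  shows "dd f [X, Y] p = dd f [Y, X] p"
proof (rule ccontr)
  assume ne: "dd f [X, Y] p \<noteq> dd f [Y, X] p"
  define e where "e = \<bar>dd f [X, Y] p - dd f [Y, X] p\<bar> / 2"
  have e: "e > 0" using ne unfolding e_def by simp
  obtain r where r: "r > 0" "ball p r \<subseteq> U" using U p open_contains_ball by blast
  obtain d1 where d1: "d1 > 0" "\<And>q. dist q p < d1 \<Longrightarrow> dist (dd f [Y, X] q) (dd f [Y, X] p) < e"
    using smooth_cont[OF sm U p, of "[Y, X]"] e unfolding continuous_at_eps_delta by blast
  obtain d2 where d2: "d2 > 0" "\<And>q. dist q p < d2 \<Longrightarrow> dist (dd f [X, Y] q) (dd f [X, Y] p) < e"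
    using smooth_cont[OF sm U p, of "[X, Y]"] e unfolding continuous_at_eps_delta by blast
  define K where "K = norm X + norm Y + 1"
  have K: "K > 0" unfolding K_def using norm_ge_zero[of X] norm_ge_zero[of Y] by linarith
  define h where "h = min r (min d1 d2) / (2 * K)"
  have h: "h > 0" unfolding h_def using r d1 d2 K by simp
  have "h * K = min r (min d1 d2) / 2" unfolding h_def using K by simp
  moreover have "min r (min d1 d2) > 0" using r d1 d2 by simp
  ultimately have hK: "h * K < min r (min d1 d2)" by linarith
  have near: "dist (p + s *\<^sub>R A + t *\<^sub>R B) p < min r (min d1 d2)"
    if "0 \<le> s" "s \<le> h" "0 \<le> t" "t \<le> h" "(A = X \<and> B = Y) \<or> (A = Y \<and> B = X)" for s t A B
  proof -
    have "dist (p + s *\<^sub>R A + t *\<^sub>R B) p = norm (s *\<^sub>R A + t *\<^sub>R B)" by (simp add: dist_norm)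
    also have "\<dots> \<le> s * norm A + t * norm B" using that norm_triangle_ineq[of "s *\<^sub>R A" "t *\<^sub>R B"]
      by simp
    also have "\<dots> \<le> h * norm A + h * norm B" using that by (intro add_mono mult_right_mono) auto
    also have "\<dots> \<le> h * K" using that h unfolding K_def by (auto simp: algebra_simps)
    finally show ?thesis using hK by simp
  qed
  have inU: "p + s *\<^sub>R A + t *\<^sub>R B \<in> U"
    if "0 \<le> s" "s \<le> h" "0 \<le> t" "t \<le> h" "(A = X \<and> B = Y) \<or> (A = Y \<and> B = X)" for s t A B
    using near[OF that] r(2) by (auto simp: dist_commute)
  obtain \<xi> \<eta> where 1: "0 < \<xi>" "\<xi> < h" "0 < \<eta>" "\<eta> < h"
     "f (p + h *\<^sub>R X + h *\<^sub>R Y) - f (p + h *\<^sub>R X) - f (p + h *\<^sub>R Y) + f p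
       = h * h * dd f [Y, X] (p + \<xi> *\<^sub>R X + \<eta> *\<^sub>R Y)"
  proof -
    have "\<And>s t. 0 \<le> s \<Longrightarrow> s \<le> h \<Longrightarrow> 0 \<le> t \<Longrightarrow> t \<le> h \<Longrightarrow> p + s *\<^sub>R X + t *\<^sub>R Y \<in> U"
      by (rule inU) auto
    from schwarz_core[OF sm h, of p X Y, OF this] show ?thesis using that by blast
  qed
  obtain \<xi>' \<eta>' where 2: "0 < \<xi>'" "\<xi>' < h" "0 < \<eta>'" "\<eta>' < h"
     "f (p + h *\<^sub>R Y + h *\<^sub>R X) - f (p + h *\<^sub>R Y) - f (p + h *\<^sub>R X) + f p
       = h * h * dd f [X, Y] (p + \<xi>' *\<^sub>R Y + \<eta>' *\<^sub>R X)"
  proof -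
    have "\<And>s t. 0 \<le> s \<Longrightarrow> s \<le> h \<Longrightarrow> 0 \<le> t \<Longrightarrow> t \<le> h \<Longrightarrow> p + s *\<^sub>R Y + t *\<^sub>R X \<in> U"
      by (rule inU) auto
    from schwarz_core[OF sm h, of p Y X, OF this] show ?thesis using that by blast
  qed
  have eq: "dd f [Y, X] (p + \<xi> *\<^sub>R X + \<eta> *\<^sub>R Y) = dd f [X, Y] (p + \<xi>' *\<^sub>R Y + \<eta>' *\<^sub>R X)"
  proof -
    have pp: "p + h *\<^sub>R Y + h *\<^sub>R X = p + h *\<^sub>R X + h *\<^sub>R Y" by (simp add: add_ac)
    have "h * h * dd f [Y, X] (p + \<xi> *\<^sub>R X + \<eta> *\<^sub>R Y) = h * h * dd f [X, Y] (p + \<xi>' *\<^sub>R Y + \<eta>' *\<^sub>R X)"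
      using 1(5) 2(5) unfolding pp by linarith
    then show ?thesis using h by simp
  qed
  have a: "dist (dd f [Y, X] (p + \<xi> *\<^sub>R X + \<eta> *\<^sub>R Y)) (dd f [Y, X] p) < e"
    using d1(2) near[of \<xi> \<eta> X Y] 1 by simp
  have b: "dist (dd f [X, Y] (p + \<xi>' *\<^sub>R Y + \<eta>' *\<^sub>R X)) (dd f [X, Y] p) < e"
    using d2(2) near[of \<xi>' \<eta>' Y X] 2 by simp
  show False using a b eq unfolding e_def dist_real_def by argo
qed

lemma dd_lincomp:
  assumes sm: "smooth_on U f" and U: "open U" and M: "bounded_linear M"
    and MU: "\<And>q. q \<in> U \<Longrightarrow> M q \<in> U" and hom: "\<And>q. q \<in> U \<Longrightarrow> f (M q) = c * f q"
    and q: "q \<in> U"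
  shows "dd f (map M vs) (M q) = c * dd f vs q"
  using q
proof (induction vs arbitrary: q)
  case Nil then show ?case using hom by simp
next
  case (Cons v vs)
  let ?h = "dd f (map M vs)"
  have Mq: "M q \<in> U" using MU Cons.prems .
  have hd: "(?h has_derivative frechet_derivative ?h (at (M q))) (at (M q))"
    using smooth_diff[OF sm Mq] frechet_derivative_works by blast
  have c1: "((\<lambda>x. ?h (M x)) has_derivative (\<lambda>x. frechet_derivative ?h (at (M q)) (M x))) (at q)"
    using has_derivative_compose[OF bounded_linear_imp_has_derivative[OF M] hd] by (simp add: o_def)
  have gd: "(dd f vs has_derivative frechet_derivative (dd f vs) (at q)) (at q)"
    using smooth_diff[OF sm Cons.prems] frechet_derivative_works by blast
  have c2: "((\<lambda>x. c * dd f vs x) has_derivative (\<lambda>x. c * frechet_derivative (dd f vs) (at q) x)) (at q)"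
    using has_derivative_mult_right[OF gd] .
  have eq: "\<And>y. y \<in> U \<Longrightarrow> ?h (M y) = c * dd f vs y" using Cons.IH by blast
  have "frechet_derivative (\<lambda>x. ?h (M x)) (at q) = frechet_derivative (\<lambda>x. c * dd f vs x) (at q)"
    using fd_local[OF U Cons.prems eq] .
  then have "(\<lambda>x. frechet_derivative ?h (at (M q)) (M x)) = (\<lambda>x. c * frechet_derivative (dd f vs) (at q) x)"
    using frechet_derivative_at[OF c1] frechet_derivative_at[OF c2] by simp
  then have "frechet_derivative ?h (at (M q)) (M v) = c * frechet_derivative (dd f vs) (at q) v"
    by metis
  then show ?case by simp
qed


lemma bl_Re_nth [bounded_linear_intros]: "bounded_linear (\<lambda>x::complex^'n. Re (x $ j))"
proof -
  show ?thesis by (rule bounded_linear_compose[OF bounded_linear_Re bounded_linear_vec_nth])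
qed
lemma bl_Im_nth [bounded_linear_intros]: "bounded_linear (\<lambda>x::complex^'n. Im (x $ j))"
proof -
  show ?thesis by (rule bounded_linear_compose[OF bounded_linear_Im bounded_linear_vec_nth])
qed

definition nsq :: "complex \<Rightarrow> real" where "nsq z = Re z * Re z + Im z * Im z"

lemma nsq_cmod: "nsq z = (cmod z)^2" unfolding nsq_def cmod_power2 by (simp add: power2_eq_square)
lemma nsq_ge0: "0 \<le> nsq z" unfolding nsq_def by simp
lemma nsq_pos: "z \<noteq> 0 \<Longrightarrow> 0 < nsq z" unfolding nsq_cmod by simp
lemma nsq_mult: "nsq (a * z) = nsq a * nsq z" unfolding nsq_cmod by (simp add: norm_mult power_mult_distrib)

definition Fh :: "('n::finite \<Rightarrow> real) \<Rightarrow> complex^'n \<Rightarrow> real \<Rightarrow> real" where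
  "Fh al q s = (\<Sum>j\<in>UNIV. nsq (q $ j) * s powr (- al j))"

definition psi :: "('n::finite \<Rightarrow> real) \<Rightarrow> complex^'n \<Rightarrow> real \<Rightarrow> real" where
  "psi al q y = (THE s. 0 < s \<and> Fh al q s = y)"

definition phi :: "('n::finite \<Rightarrow> real) \<Rightarrow> complex^'n \<Rightarrow> real" where
  "phi al q = psi al q 1"

lemma nz_comp: "(q::complex^'n) \<noteq> 0 \<Longrightarrow> \<exists>j. q $ j \<noteq> 0"
  by (metis vec_eq_iff zero_index)

lemma Fh_strict_mono:
  assumes apos: "\<forall>j. 0 < al j" and q: "q \<noteq> 0" and s: "0 < s" "s < t"
  shows "Fh al q t < Fh al q s"
  unfolding Fh_def
proof (rule sum_strict_mono_ex1)
  show "\<forall>x\<in>UNIV. nsq (q $ x) * t powr - al x \<le> nsq (q $ x) * s powr - al x"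
    using apos s by (auto intro!: mult_left_mono nsq_ge0 less_imp_le[OF powr_less_mono2_neg])
  obtain j where "q $ j \<noteq> 0" using nz_comp[OF q] by blast
  then show "\<exists>a\<in>UNIV. nsq (q $ a) * t powr - al a < nsq (q $ a) * s powr - al a"
    using apos s by (auto intro!: bexI[of _ j] mult_strict_left_mono nsq_pos powr_less_mono2_neg)
qed simp

lemma Fh_cont: "continuous_on {0<..} (Fh al q)"
  unfolding Fh_def by (auto intro!: continuous_intros)

lemma Fh_exists:
  assumes apos: "\<forall>j. 0 < al j" and q: "q \<noteq> 0" and y: "0 < y"
  shows "\<exists>s>0. Fh al q s = y"
proof -
  define m where "m = Min (range al)"
  have m: "0 < m" "\<And>j. m \<le> al j" unfolding m_def using apos by auto
  define N where "N = (\<Sum>j\<in>UNIV. nsq (q $ j))"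
  obtain j where j: "q $ j \<noteq> 0" using nz_comp[OF q] by blast
  have N: "0 < N" unfolding N_def
    by (rule sum_pos2[where i=j]) (auto simp: nsq_ge0 nsq_pos j)
  define c where "c = (N / y) powr (1 / m)"
  have c: "0 < c" unfolding c_def using N y by simp
  have cm: "N * c powr (- m) = y" unfolding c_def using N y m
    by (simp add: powr_powr powr_minus divide_simps)
  define s0 where "s0 = min 1 c"
  define s1 where "s1 = max 1 c"
  have s01: "0 < s0" "s0 \<le> s1" "s0 \<le> 1" "1 \<le> s1" "s0 \<le> c" "c \<le> s1" unfolding s0_def s1_def using c by auto
  have lo: "y \<le> Fh al q s0"
  proof -
    have "y = N * c powr (- m)" using cm by simp
    also have "\<dots> \<le> N * s0 powr (- m)" using N m s01 c
      by (intro mult_left_mono powr_mono2') auto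
    also have "\<dots> = (\<Sum>j\<in>UNIV. nsq (q $ j) * s0 powr (- m))" unfolding N_def by (simp add: sum_distrib_right)
    also have "\<dots> \<le> Fh al q s0" unfolding Fh_def using m s01
      by (intro sum_mono mult_left_mono powr_mono') (auto simp: nsq_ge0)
    finally show ?thesis .
  qed
  have hi: "Fh al q s1 \<le> y"
  proof -
    have "Fh al q s1 \<le> (\<Sum>j\<in>UNIV. nsq (q $ j) * s1 powr (- m))" unfolding Fh_def using m s01
      by (intro sum_mono mult_left_mono powr_mono) (auto simp: nsq_ge0)
    also have "\<dots> = N * s1 powr (- m)" unfolding N_def by (simp add: sum_distrib_right)
    also have "\<dots> \<le> N * c powr (- m)" using N m s01 c
      by (intro mult_left_mono powr_mono2') auto
    also have "\<dots> = y" using cm by simp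
    finally show ?thesis .
  qed
  have "continuous_on {s0..s1} (Fh al q)"
    by (rule continuous_on_subset[OF Fh_cont]) (use s01 in auto)
  then obtain s where "s \<ge> s0" "s \<le> s1" "Fh al q s = y" using IVT2'[of "Fh al q" s1 y s0] lo hi s01 by blast
  then show ?thesis using s01 by (intro exI[of _ s]) auto
qed

lemma psi_unique:
  assumes apos: "\<forall>j. 0 < al j" and q: "q \<noteq> 0" and s: "0 < s" "Fh al q s = y"
  shows "psi al q y = s"
  unfolding psi_def
proof (rule the_equality)
  show "0 < s \<and> Fh al q s = y" using s by simp
  fix t assume t: "0 < t \<and> Fh al q t = y"
  show "t = s"
  proof (rule ccontr)
    assume "t \<noteq> s"
    then consider "t < s" | "s < t" by linarith
    then show False using Fh_strict_mono[OF apos q] s t by cases force+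
  qed
qed

lemma psi_prop:
  assumes apos: "\<forall>j. 0 < al j" and q: "q \<noteq> 0" and y: "0 < y"
  shows "0 < psi al q y" "Fh al q (psi al q y) = y"
proof -
  obtain s where "0 < s" "Fh al q s = y" using Fh_exists[OF apos q y] by blast
  then have "psi al q y = s" using psi_unique[OF apos q] by blast
  then show "0 < psi al q y" "Fh al q (psi al q y) = y" using \<open>0 < s\<close> \<open>Fh al q s = y\<close> by auto
qed

lemma phi_pos: "\<forall>j. 0 < al j \<Longrightarrow> q \<noteq> 0 \<Longrightarrow> 0 < phi al q"
  unfolding phi_def using psi_prop[of al q 1] by simp

lemma phi_eq: "\<forall>j. 0 < al j \<Longrightarrow> q \<noteq> 0 \<Longrightarrow> Fh al q (phi al q) = 1"
  unfolding phi_def using psi_prop[of al q 1] by simp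

definition diag :: "('n \<Rightarrow> complex) \<Rightarrow> complex^'n \<Rightarrow> complex^'n" where
  "diag a v = (\<chi> j. a j * v $ j)"

lemma diag_nz: "(\<forall>j. a j \<noteq> 0) \<Longrightarrow> q \<noteq> 0 \<Longrightarrow> diag a q \<noteq> 0"
proof
  assume a: "\<forall>j. a j \<noteq> 0" and q: "q \<noteq> 0" and d: "diag a q = 0"
  obtain j where j: "q $ j \<noteq> 0" using nz_comp[OF q] by blast
  have "diag a q $ j = a j * q $ j" unfolding diag_def by simp
  then show False using d a j by simp
qed

lemma bl_diag: "bounded_linear (diag a)"
proof -
  have "linear (diag a)" unfolding diag_def
    by (rule linearI) (simp_all add: vec_eq_iff algebra_simps scaleR_conv_of_real)
  then show ?thesis by (simp add: linear_conv_bounded_linear)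
qed

lemma phi_hom:
  assumes apos: "\<forall>j. 0 < al j" and q: "q \<noteq> 0" and r: "0 < r"
    and a: "\<And>j. cmod (a j) = r powr al j"
  shows "phi al (diag a q) = r^2 * phi al q"
proof -
  have anz: "\<forall>j. a j \<noteq> 0" using a r by (metis norm_zero powr_gt_zero less_irrefl)
  have "Fh al (diag a q) (r^2 * phi al q) = Fh al q (phi al q)"
    unfolding Fh_def diag_def
  proof (intro sum.cong refl)
    fix j
    have p: "0 < phi al q" using phi_pos[OF apos q] .
    have "nsq (a j) = (r powr al j)^2" by (simp add: nsq_cmod a)
    then have "nsq (a j * q $ j) * (r\<^sup>2 * phi al q) powr - al j
        = nsq (q $ j) * ((r powr al j)^2 * (r\<^sup>2 powr - al j)) * phi al q powr - al j"
      using p r by (simp add: nsq_mult powr_mult)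
    also have "(r powr al j)^2 * (r\<^sup>2 powr - al j) = 1"
    proof -
      have 1: "(r powr al j)^2 = r powr (al j + al j)" unfolding power2_eq_square powr_add ..
      have "r\<^sup>2 = r powr 2" using r by (simp add: powr_realpow)
      then have 2: "r\<^sup>2 powr - al j = r powr (2 * - al j)" by (simp add: powr_powr)
      show ?thesis unfolding 1 2 powr_add[symmetric] using r by simp
    qed
    finally show "nsq ((\<chi> j. a j * q $ j) $ j) * (r\<^sup>2 * phi al q) powr - al j = nsq (q $ j) * phi al q powr - al j"
      by simp
  qed
  also have "\<dots> = 1" using phi_eq[OF apos q] .
  finally have "Fh al (diag a q) (r^2 * phi al q) = 1" .
  moreover have "0 < r^2 * phi al q" using phi_pos[OF apos q] r by simp
  ultimately show ?thesis unfolding phi_def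
    using psi_unique[OF apos diag_nz[OF anz q]] by (simp add: phi_def)
qed


lemma d_nsq:
  assumes "(f has_derivative f') (at x)"
  shows "((\<lambda>z. nsq (f z $ j)) has_derivative
     (\<lambda>h. 2 * (Re (f x $ j) * Re (f' h $ j) + Im (f x $ j) * Im (f' h $ j)))) (at x)"
proof -
  have r: "((\<lambda>z. Re (f z $ j)) has_derivative (\<lambda>h. Re (f' h $ j))) (at x)"
    using bounded_linear.has_derivative[OF bl_Re_nth assms] .
  have i: "((\<lambda>z. Im (f z $ j)) has_derivative (\<lambda>h. Im (f' h $ j))) (at x)"
    using bounded_linear.has_derivative[OF bl_Im_nth assms] .
  show ?thesis unfolding nsq_def
    using has_derivative_add[OF has_derivative_mult[OF r r] has_derivative_mult[OF i i]]
    by (simp add: algebra_simps)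
qed

lemma d_powr_const:
  fixes g :: "'a::real_normed_vector \<Rightarrow> real"
  assumes "(g has_derivative g') (at x)" "0 < g x"
  shows "((\<lambda>z. g z powr c) has_derivative (\<lambda>h. c * g' h * g x powr (c - 1))) (at x)"
proof -
  have "((\<lambda>z. g z powr c) has_derivative (\<lambda>h. (g x powr c) * (0 * ln (g x) + g' h * c / g x))) (at x)"
    using assms has_derivative_const[of c]
    by (intro has_derivative_powr) auto
  moreover have "g x powr (c - 1) = g x powr c / g x" using assms(2) by (auto simp: powr_diff less_imp_le)
  ultimately show ?thesis by (simp add: field_simps)
qed

definition DqF :: "('n::finite \<Rightarrow> real) \<Rightarrow> complex^'n \<Rightarrow> real \<Rightarrow> complex^'n \<Rightarrow> real" where
  "DqF al q s v = (\<Sum>j\<in>UNIV. 2 * (Re (q $ j) * Re (v $ j) + Im (q $ j) * Im (v $ j)) * s powr (- al j))"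

definition Fs :: "('n::finite \<Rightarrow> real) \<Rightarrow> complex^'n \<Rightarrow> real \<Rightarrow> real" where
  "Fs al q s = (\<Sum>j\<in>UNIV. nsq (q $ j) * (- al j * s powr (- al j - 1)))"

lemma bl_DqF: "bounded_linear (DqF al q s)"
  unfolding DqF_def by (intro bounded_linear_intros bounded_linear_sum)

lemma F_deriv:
  assumes s: "0 < s"
  shows "((\<lambda>z. Fh al (fst z) (snd z)) has_derivative (\<lambda>h. DqF al q s (fst h) + snd h * Fs al q s)) (at (q, s))"
proof -
  have fst: "(fst has_derivative fst) (at (q, s))" by (rule has_derivative_fst[OF has_derivative_ident])
  have snd: "(snd has_derivative snd) (at (q, s))" by (rule has_derivative_snd[OF has_derivative_ident])
  have t: "((\<lambda>z. nsq (fst z $ j) * snd z powr (- al j)) has_derivative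
     (\<lambda>h. nsq (q $ j) * (- al j * snd h * s powr (- al j - 1)) +
          2 * (Re (q $ j) * Re (fst h $ j) + Im (q $ j) * Im (fst h $ j)) * s powr (- al j))) (at (q, s))" for j
    using has_derivative_mult[OF d_nsq[OF fst, of j] d_powr_const[OF snd, of "- al j"]] s by simp
  have "((\<lambda>z. \<Sum>j\<in>UNIV. nsq (fst z $ j) * snd z powr (- al j)) has_derivative
     (\<lambda>h. \<Sum>j\<in>UNIV. nsq (q $ j) * (- al j * snd h * s powr (- al j - 1)) +
          2 * (Re (q $ j) * Re (fst h $ j) + Im (q $ j) * Im (fst h $ j)) * s powr (- al j))) (at (q, s))"
    by (rule has_derivative_sum) (rule t)
  moreover have "(\<lambda>h. \<Sum>j\<in>UNIV. nsq (q $ j) * (- al j * snd h * s powr (- al j - 1)) +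
          2 * (Re (q $ j) * Re (fst h $ j) + Im (q $ j) * Im (fst h $ j)) * s powr (- al j))
     = (\<lambda>h. DqF al q s (fst h) + snd h * Fs al q s)"
  proof
    fix h
    have "DqF al q s (fst h) + snd h * Fs al q s = (\<Sum>j\<in>UNIV. 2 * (Re (q $ j) * Re (fst h $ j) + Im (q $ j) * Im (fst h $ j)) * s powr (- al j)
       + snd h * (nsq (q $ j) * (- al j * s powr (- al j - 1))))"
      unfolding DqF_def Fs_def sum_distrib_left sum.distrib ..
    also have "\<dots> = (\<Sum>j\<in>UNIV. nsq (q $ j) * (- al j * snd h * s powr (- al j - 1)) +
          2 * (Re (q $ j) * Re (fst h $ j) + Im (q $ j) * Im (fst h $ j)) * s powr (- al j))"
      by (intro sum.cong refl) (simp add: algebra_simps)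
    finally show "(\<Sum>j\<in>UNIV. nsq (q $ j) * (- al j * snd h * s powr (- al j - 1)) +
          2 * (Re (q $ j) * Re (fst h $ j) + Im (q $ j) * Im (fst h $ j)) * s powr (- al j))
       = DqF al q s (fst h) + snd h * Fs al q s" by simp
  qed
  ultimately show ?thesis unfolding Fh_def by simp
qed

lemma Fh_mono:
  assumes apos: "\<forall>j. 0 < al j" and q: "q \<noteq> 0" and s: "0 < s" "s \<le> t"
  shows "Fh al q t \<le> Fh al q s"
  using Fh_strict_mono[OF apos q, of s t] s by (cases "s = t") auto

lemma pos_nbhd:
  fixes k :: "'a::metric_space \<Rightarrow> real"
  assumes "isCont k z0" "0 < k z0"
  shows "\<exists>d>0. \<forall>z. dist z z0 < d \<longrightarrow> 0 < k z"
proof -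
  obtain d where "d > 0" "\<forall>z. dist z z0 < d \<longrightarrow> dist (k z) (k z0) < k z0"
    using assms unfolding continuous_at_eps_delta by blast
  then show ?thesis by (intro exI[of _ d]) (auto simp: dist_real_def)
qed

lemma isCont_Re_fst: "isCont (\<lambda>x. Re (fst x $ j)) (z0::(complex^'n) \<times> real)"
  by (rule linear_continuous_at) (rule bounded_linear_compose[OF bl_Re_nth bounded_linear_fst])
lemma isCont_Im_fst: "isCont (\<lambda>x. Im (fst x $ j)) (z0::(complex^'n) \<times> real)"
  by (rule linear_continuous_at) (rule bounded_linear_compose[OF bl_Im_nth bounded_linear_fst])

lemma Fh_cont2: "isCont (\<lambda>z. Fh al (fst z) s - snd z) zz"
  unfolding Fh_def nsq_def by (intro continuous_intros isCont_Re_fst isCont_Im_fst)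

lemma psi_cont:
  fixes q0 :: "complex^'n::finite"
  assumes apos: "\<forall>j. 0 < al j" and q0: "q0 \<noteq> 0" and y0: "0 < y0"
  shows "isCont (\<lambda>z. psi al (fst z) (snd z)) (q0, y0)"
  unfolding continuous_at_eps_delta
proof (intro allI impI)
  fix e :: real assume e: "0 < e"
  define s0 where "s0 = psi al q0 y0"
  have s0: "0 < s0" "Fh al q0 s0 = y0" unfolding s0_def using psi_prop[OF apos q0 y0] by auto
  define e' where "e' = min e (s0 / 2)"
  have e': "0 < e'" "e' \<le> e" "e' < s0" unfolding e'_def using e s0 by auto
  define sl where "sl = s0 - e'"
  define su where "su = s0 + e'"
  have sl: "0 < sl" "sl < s0" unfolding sl_def using e' by auto
  have su: "s0 < su" unfolding su_def using e' by auto
  have Fl: "y0 < Fh al q0 sl" using Fh_strict_mono[OF apos q0 sl(1) sl(2)] s0 by simp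
  have Fu: "Fh al q0 su < y0" using Fh_strict_mono[OF apos q0 s0(1) su] s0 by simp
  obtain d1 where d1: "d1 > 0" "\<forall>z. dist z (q0, y0) < d1 \<longrightarrow> 0 < Fh al (fst z) sl - snd z"
    using pos_nbhd[OF Fh_cont2[where al=al and s=sl and zz="(q0, y0)"]] Fl by auto
  have c2: "isCont (\<lambda>z. snd z - Fh al (fst z) su) (q0, y0)"
    using continuous_minus[OF Fh_cont2[where al=al and s=su and zz="(q0, y0)"]] by simp
  obtain d2 where d2: "d2 > 0" "\<forall>z. dist z (q0, y0) < d2 \<longrightarrow> 0 < snd z - Fh al (fst z) su"
    using pos_nbhd[OF c2] Fu by auto
  have T: "open ((- {0}) \<times> {0<..} :: ((complex^'n) \<times> real) set)"
    by (intro open_Times) auto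
  obtain d3 where d3: "d3 > 0" "ball (q0, y0) d3 \<subseteq> (- {0}) \<times> {0<..}"
    using T q0 y0 open_contains_ball by (metis ComplI SigmaI greaterThan_iff singletonD)
  show "\<exists>d>0. \<forall>z. dist z (q0, y0) < d \<longrightarrow> dist (psi al (fst z) (snd z)) (psi al (fst (q0, y0)) (snd (q0, y0))) < e"
  proof (intro exI[of _ "min d1 (min d2 d3)"] conjI allI impI)
    show "0 < min d1 (min d2 d3)" using d1 d2 d3 by simp
    fix z :: "(complex^'n) \<times> real" assume dz: "dist z (q0, y0) < min d1 (min d2 d3)"
    have "z \<in> ball (q0, y0) d3" using dz by (simp add: dist_commute)
    then have "z \<in> (- {0}) \<times> {0<..}" using d3(2) by blast
    then have zT: "fst z \<noteq> 0" "0 < snd z" by (auto simp: mem_Times_iff)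
    have k1: "snd z < Fh al (fst z) sl" using d1 dz by auto
    have k2: "Fh al (fst z) su < snd z" using d2 dz by auto
    define t where "t = psi al (fst z) (snd z)"
    have t: "0 < t" "Fh al (fst z) t = snd z" unfolding t_def using psi_prop[OF apos zT] by auto
    have "sl < t"
    proof (rule ccontr)
      assume "\<not> sl < t"
      then have "Fh al (fst z) sl \<le> Fh al (fst z) t" using Fh_mono[OF apos zT(1) t(1)] by simp
      then show False using k1 t by simp
    qed
    moreover have "t < su"
    proof (rule ccontr)
      assume "\<not> t < su"
      then have "Fh al (fst z) t \<le> Fh al (fst z) su" using Fh_mono[OF apos zT(1) sl(1)[THEN less_trans, OF sl(2)[THEN less_trans, OF su]]] by simp
      then show False using k2 t by simp
    qed
    ultimately have "\<bar>t - s0\<bar> < e" using e' unfolding sl_def su_def by (simp add: abs_less_iff)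
    then show "dist (psi al (fst z) (snd z)) (psi al (fst (q0, y0)) (snd (q0, y0))) < e"
      unfolding t_def s0_def dist_real_def by simp
  qed
qed

definition Sp :: "('n::finite \<Rightarrow> real) \<Rightarrow> complex^'n \<Rightarrow> real" where
  "Sp al q = (\<Sum>j\<in>UNIV. al j * nsq (q $ j) * phi al q powr (- al j - 1))"

definition Pp :: "('n::finite \<Rightarrow> real) \<Rightarrow> complex^'n \<Rightarrow> complex^'n \<Rightarrow> real" where
  "Pp al q v = DqF al q (phi al q) v"

lemma Sp_pos:
  assumes apos: "\<forall>j. 0 < al j" and q: "q \<noteq> 0"
  shows "0 < Sp al q"
proof -
  obtain j where j: "q $ j \<noteq> 0" using nz_comp[OF q] by blast
  have p: "0 < phi al q" using phi_pos[OF apos q] .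
  show ?thesis unfolding Sp_def
  proof (rule sum_pos2[where i=j])
    show "0 < al j * nsq (q $ j) * phi al q powr (- al j - 1)"
      using apos p nsq_pos[OF j] by (intro mult_pos_pos) auto
  qed (simp_all add: apos p nsq_ge0 less_imp_le)
qed

lemma Fs_Sp: "Fs al q (phi al q) = - Sp al q"
  unfolding Fs_def Sp_def by (simp add: sum_negf[symmetric] algebra_simps)

lemma phi_deriv:
  fixes q :: "complex^'n::finite"
  assumes apos: "\<forall>j. 0 < al j" and q: "q \<noteq> 0"
  shows "(phi al has_derivative (\<lambda>v. Pp al q v / Sp al q)) (at q)"
proof -
  define s0 where "s0 = phi al q"
  have s0: "0 < s0" unfolding s0_def using phi_pos[OF apos q] .
  define c where "c = Fs al q s0"
  have c: "c \<noteq> 0" unfolding c_def s0_def Fs_Sp using Sp_pos[OF apos q] by simp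
  define G where "G z = (fst z, Fh al (fst z) (snd z))" for z :: "(complex^'n) \<times> real"
  define G' where "G' h = (fst h, DqF al q s0 (fst h) + snd h * c)" for h :: "(complex^'n) \<times> real"
  define H where "H z = (fst z, psi al (fst z) (snd z))" for z :: "(complex^'n) \<times> real"
  define H' where "H' h = (fst h, (snd h - DqF al q s0 (fst h)) / c)" for h :: "(complex^'n) \<times> real"
  have Hq: "H (q, 1) = (q, s0)" unfolding H_def s0_def phi_def by simp
  have derf: "(G has_derivative G') (at (H (q, 1)))"
    unfolding Hq G_def G'_def c_def
    by (rule has_derivative_Pair[OF has_derivative_fst[OF has_derivative_ident] F_deriv[OF s0]])
  have bl: "bounded_linear H'"
  proof -
    have "bounded_linear (\<lambda>h::(complex^'n) \<times> real. DqF al q s0 (fst h))"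
      by (rule bounded_linear_compose[OF bl_DqF bounded_linear_fst])
    then have "bounded_linear (\<lambda>h::(complex^'n) \<times> real. snd h - DqF al q s0 (fst h))"
      by (rule bounded_linear_sub[OF bounded_linear_snd])
    from bounded_linear_compose[OF bounded_linear_mult_left[of "inverse c"] this]
    have "bounded_linear (\<lambda>h::(complex^'n) \<times> real. (snd h - DqF al q s0 (fst h)) / c)"
      by (simp add: divide_inverse)
    then show ?thesis unfolding H'_def
      by (intro bounded_linear_Pair bounded_linear_fst)
  qed
  have inv: "H' \<circ> G' = id" unfolding H'_def G'_def using c by (auto simp: fun_eq_iff)
  have contg: "continuous (at (q, 1)) H"
    unfolding H_def by (intro continuous_Pair continuous_fst continuous_ident psi_cont[OF apos q]) simp
  have T: "open ((- {0}) \<times> {0<..} :: ((complex^'n) \<times> real) set)" by (intro open_Times) auto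
  have GH: "G (H z) = z" if "z \<in> (- {0}) \<times> {0<..}" for z
    using that psi_prop[OF apos, of "fst z" "snd z"] unfolding G_def H_def by (auto simp: mem_Times_iff)
  have Hd: "(H has_derivative H') (at (q, 1))"
    by (rule has_derivative_inverse_basic[OF derf bl inv contg T _ GH]) (use q in auto)
  have e: "((\<lambda>x::complex^'n. (x, 1::real)) has_derivative (\<lambda>v. (v, 0))) (at q)"
    by (rule has_derivative_Pair[OF has_derivative_ident has_derivative_const])
  have "((\<lambda>x. snd (H (x, 1))) has_derivative (\<lambda>v. snd (H' (v, 0)))) (at q)"
    using has_derivative_snd[OF has_derivative_compose[OF e Hd]] by (simp add: o_def)
  moreover have "(\<lambda>x. snd (H (x, 1))) = phi al" unfolding H_def phi_def by simp
  moreover have "(\<lambda>v. snd (H' (v, 0))) = (\<lambda>v. Pp al q v / Sp al q)"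
    unfolding H'_def Pp_def c_def s0_def Fs_Sp by (auto simp: fun_eq_iff)
  ultimately show ?thesis by simp
qed


lemma open_punct: "open punctured" unfolding punctured_def by (simp add: open_Compl)
lemma in_punct: "p \<in> punctured \<longleftrightarrow> p \<noteq> 0" unfolding punctured_def by simp

definition ip :: "complex \<Rightarrow> complex \<Rightarrow> real" where "ip a b = Re a * Re b + Im a * Im b"

lemma Pp_alt: "Pp al q v = (\<Sum>j\<in>UNIV. 2 * ip (q $ j) (v $ j) * phi al q powr (- al j))"
  unfolding Pp_def DqF_def ip_def ..

lemma KS_ip: "(\<lambda>q::complex^'n. c * ip (q $ j) (v $ j)) \<in> KS U B"
  unfolding ip_def by (intro KS.lin bounded_linear_intros)

lemma KS_nsq: "(\<lambda>q::complex^'n. nsq (q $ j)) \<in> KS U B"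
  unfolding nsq_def by (intro KS.add KS.mult KS.lin bounded_linear_intros)

lemma KS_phipow: "\<forall>j. 0 < al j \<Longrightarrow> (\<lambda>q. phi al q powr c) \<in> KS punctured {phi al}"
  by (intro KS.pow KS.atom) (auto simp: in_punct phi_pos)

lemma KS_Pp: "\<forall>j. 0 < al j \<Longrightarrow> (\<lambda>q. Pp al q v) \<in> KS punctured {phi al}"
  unfolding Pp_alt by (intro KS_sum KS.mult KS_ip KS_phipow) auto

lemma KS_Sp: "\<forall>j. 0 < al j \<Longrightarrow> (\<lambda>q. Sp al q) \<in> KS punctured {phi al}"
  unfolding Sp_def by (intro KS_sum KS.mult KS.const KS_nsq KS_phipow) auto

lemma phi_good:
  fixes al :: "'n::finite \<Rightarrow> real"
  shows "\<forall>j. 0 < al j \<Longrightarrow> good punctured {phi al} (phi al)"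
  unfolding good_def
proof (intro conjI ballI allI)
  assume apos: "\<forall>j. 0 < al j"
  fix p :: "complex^'n" assume "p \<in> punctured"
  then show "phi al differentiable at p" using phi_deriv[OF apos] unfolding differentiable_def in_punct by blast
next
  fix v assume apos: "\<forall>j. 0 < al j"
  have "\<forall>p\<in>punctured. frechet_derivative (phi al) (at p) v = Pp al p v / Sp al p"
    using phi_deriv[OF apos] frechet_derivative_at in_punct by metis
  moreover have "(\<lambda>p. Pp al p v / Sp al p) \<in> KS punctured {phi al}"
    using KS_divide[OF KS_Pp[OF apos] KS_Sp[OF apos]] Sp_pos[OF apos] in_punct by blast
  ultimately show "\<exists>h\<in>KS punctured {phi al}. \<forall>p\<in>punctured. frechet_derivative (phi al) (at p) v = h p"
    by (intro bexI[where x="\<lambda>p. Pp al p v / Sp al p"]) auto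
qed

lemma atoms_good: "\<forall>j. 0 < al j \<Longrightarrow> b \<in> {phi al} \<Longrightarrow> good punctured {phi al} b"
  using phi_good by blast

lemma KS_smooth_phi: "\<forall>j. 0 < al j \<Longrightarrow> f \<in> KS punctured {phi al} \<Longrightarrow> smooth_on punctured f"
  by (rule KS_smooth[OF open_punct atoms_good])

lemma phi_smooth: "\<forall>j. 0 < al j \<Longrightarrow> smooth_on punctured (phi al)"
  by (rule KS_smooth_phi) (auto intro: KS.atom)

lemma KS_ddphi: "\<forall>j. 0 < al j \<Longrightarrow> \<exists>h\<in>KS punctured {phi al}. \<forall>p\<in>punctured. dd (phi al) vs p = h p"
  by (rule KS_dd[OF open_punct atoms_good]) (auto intro: KS.atom)

lemma dd1_phi: "\<forall>j. 0 < al j \<Longrightarrow> q \<noteq> 0 \<Longrightarrow> dd (phi al) [w] q = Pp al q w / Sp al q"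
proof -
  assume a: "\<forall>j. 0 < al j" "q \<noteq> 0"
  from fun_cong[OF frechet_derivative_at[OF phi_deriv[OF a]], of w] show ?thesis by simp
qed


definition phi1 :: "('n::finite \<Rightarrow> real) \<Rightarrow> complex^'n \<Rightarrow> complex^'n \<Rightarrow> real" where
  "phi1 al p v = Pp al p v / Sp al p"
definition Bq :: "('n::finite \<Rightarrow> real) \<Rightarrow> complex^'n \<Rightarrow> complex^'n \<Rightarrow> real" where
  "Bq al p w = (\<Sum>j\<in>UNIV. 2 * al j * ip (p $ j) (w $ j) * phi al p powr (- al j - 1))"
definition Tq :: "('n::finite \<Rightarrow> real) \<Rightarrow> complex^'n \<Rightarrow> real" where
  "Tq al p = (\<Sum>j\<in>UNIV. al j * (al j + 1) * nsq (p $ j) * phi al p powr (- al j - 2))"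
definition Wq :: "('n::finite \<Rightarrow> real) \<Rightarrow> complex^'n \<Rightarrow> complex^'n \<Rightarrow> complex^'n \<Rightarrow> real" where
  "Wq al p v w = (\<Sum>j\<in>UNIV. 2 * ip (v $ j) (w $ j) * phi al p powr (- al j))"

lemma d_ip: "((\<lambda>q::complex^'n. c * ip (q $ j) (w $ j)) has_derivative (\<lambda>v. c * ip (v $ j) (w $ j))) (at p)"
  unfolding ip_def by (intro bounded_linear_imp_has_derivative bounded_linear_intros)

lemma d_nsq_at: "((\<lambda>q::complex^'n. nsq (q $ j)) has_derivative (\<lambda>v. 2 * ip (p $ j) (v $ j))) (at p)"
  using d_nsq[OF has_derivative_ident, where x=p and j=j] unfolding ip_def by simp

lemma d_phipow:
  assumes apos: "\<forall>j. 0 < al j" and p: "p \<noteq> 0"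
  shows "((\<lambda>q. phi al q powr c) has_derivative (\<lambda>v. c * phi1 al p v * phi al p powr (c - 1))) (at p)"
  using d_powr_const[OF phi_deriv[OF apos p] phi_pos[OF apos p]] unfolding phi1_def .

lemma d_Pp:
  assumes apos: "\<forall>j. 0 < al j" and p: "p \<noteq> 0"
  shows "((\<lambda>q. Pp al q w) has_derivative (\<lambda>v. Wq al p v w - Bq al p w * phi1 al p v)) (at p)"
proof -
  have "((\<lambda>q. \<Sum>j\<in>UNIV. 2 * ip (q $ j) (w $ j) * phi al q powr (- al j)) has_derivative
     (\<lambda>v. \<Sum>j\<in>UNIV. 2 * ip (p $ j) (w $ j) * (- al j * phi1 al p v * phi al p powr (- al j - 1))
            + 2 * ip (v $ j) (w $ j) * phi al p powr (- al j))) (at p)"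
    by (intro has_derivative_sum has_derivative_mult d_ip d_phipow[OF apos p])
  moreover have "(\<lambda>v. \<Sum>j\<in>UNIV. 2 * ip (p $ j) (w $ j) * (- al j * phi1 al p v * phi al p powr (- al j - 1))
            + 2 * ip (v $ j) (w $ j) * phi al p powr (- al j)) = (\<lambda>v. Wq al p v w - Bq al p w * phi1 al p v)"
  proof
    fix v
    have "Wq al p v w - Bq al p w * phi1 al p v = (\<Sum>j\<in>UNIV. 2 * ip (v $ j) (w $ j) * phi al p powr (- al j)
        - 2 * al j * ip (p $ j) (w $ j) * phi al p powr (- al j - 1) * phi1 al p v)"
      unfolding Wq_def Bq_def sum_distrib_right sum_subtractf ..
    also have "\<dots> = (\<Sum>j\<in>UNIV. 2 * ip (p $ j) (w $ j) * (- al j * phi1 al p v * phi al p powr (- al j - 1))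
            + 2 * ip (v $ j) (w $ j) * phi al p powr (- al j))"
      by (intro sum.cong refl) (simp add: algebra_simps)
    finally show "(\<Sum>j\<in>UNIV. 2 * ip (p $ j) (w $ j) * (- al j * phi1 al p v * phi al p powr (- al j - 1))
            + 2 * ip (v $ j) (w $ j) * phi al p powr (- al j)) = Wq al p v w - Bq al p w * phi1 al p v" by simp
  qed
  ultimately show ?thesis unfolding Pp_alt by simp
qed

lemma d_Sp:
  assumes apos: "\<forall>j. 0 < al j" and p: "p \<noteq> 0"
  shows "(Sp al has_derivative (\<lambda>v. Bq al p v - Tq al p * phi1 al p v)) (at p)"
proof -
  have "((\<lambda>q. \<Sum>j\<in>UNIV. al j * nsq (q $ j) * phi al q powr (- al j - 1)) has_derivative
     (\<lambda>v. \<Sum>j\<in>UNIV. al j * nsq (p $ j) * ((- al j - 1) * phi1 al p v * phi al p powr (- al j - 1 - 1))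
            + (al j * (2 * ip (p $ j) (v $ j)) + 0 * nsq (p $ j)) * phi al p powr (- al j - 1))) (at p)"
    by (intro has_derivative_sum has_derivative_mult d_nsq_at d_phipow[OF apos p] has_derivative_const)
  moreover have "(\<lambda>v. \<Sum>j\<in>UNIV. al j * nsq (p $ j) * ((- al j - 1) * phi1 al p v * phi al p powr (- al j - 1 - 1))
            + (al j * (2 * ip (p $ j) (v $ j)) + 0 * nsq (p $ j)) * phi al p powr (- al j - 1))
      = (\<lambda>v. Bq al p v - Tq al p * phi1 al p v)"
  proof
    fix v
    have "Bq al p v - Tq al p * phi1 al p v = (\<Sum>j\<in>UNIV. 2 * al j * ip (p $ j) (v $ j) * phi al p powr (- al j - 1)
        - al j * (al j + 1) * nsq (p $ j) * phi al p powr (- al j - 2) * phi1 al p v)"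
      unfolding Tq_def Bq_def sum_distrib_right sum_subtractf ..
    also have "\<dots> = (\<Sum>j\<in>UNIV. al j * nsq (p $ j) * ((- al j - 1) * phi1 al p v * phi al p powr (- al j - 1 - 1))
            + (al j * (2 * ip (p $ j) (v $ j)) + 0 * nsq (p $ j)) * phi al p powr (- al j - 1))"
    proof (intro sum.cong refl)
      fix j
      have e: "- al j - 1 - 1 = - al j - 2" by simp
      show "2 * al j * ip (p $ j) (v $ j) * phi al p powr (- al j - 1)
        - al j * (al j + 1) * nsq (p $ j) * phi al p powr (- al j - 2) * phi1 al p v =
        al j * nsq (p $ j) * ((- al j - 1) * phi1 al p v * phi al p powr (- al j - 1 - 1))
            + (al j * (2 * ip (p $ j) (v $ j)) + 0 * nsq (p $ j)) * phi al p powr (- al j - 1)"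
        unfolding e by (simp add: algebra_simps)
    qed
    finally show "(\<Sum>j\<in>UNIV. al j * nsq (p $ j) * ((- al j - 1) * phi1 al p v * phi al p powr (- al j - 1 - 1))
            + (al j * (2 * ip (p $ j) (v $ j)) + 0 * nsq (p $ j)) * phi al p powr (- al j - 1))
      = Bq al p v - Tq al p * phi1 al p v" by simp
  qed
  ultimately show ?thesis unfolding Sp_def[abs_def] by simp
qed

lemma dd1_phi1: "\<forall>j. 0 < al j \<Longrightarrow> q \<noteq> 0 \<Longrightarrow> dd (phi al) [w] q = phi1 al q w"
  unfolding phi1_def by (rule dd1_phi)

lemma phi2:
  assumes apos: "\<forall>j. 0 < al j" and p: "p \<noteq> 0"
  shows "Sp al p * dd (phi al) [v, w] p =
     Wq al p v w - Bq al p w * phi1 al p v - phi1 al p w * (Bq al p v - Tq al p * phi1 al p v)"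
proof -
  have S: "0 < Sp al p" using Sp_pos[OF apos p] .
  have "dd (phi al) [v, w] p = frechet_derivative (dd (phi al) [w]) (at p) v" by simp
  also have "\<dots> = frechet_derivative (\<lambda>q. Pp al q w / Sp al q) (at p) v"
    using fd_local[OF open_punct, of p "dd (phi al) [w]" "\<lambda>q. Pp al q w / Sp al q"] dd1_phi[OF apos] p
    by (simp add: in_punct)
  also have "\<dots> = ((Wq al p v w - Bq al p w * phi1 al p v) * Sp al p - Pp al p w * (Bq al p v - Tq al p * phi1 al p v))
      / (Sp al p * Sp al p)"
    using fun_cong[OF frechet_derivative_at[OF has_derivative_divide'[OF d_Pp[OF apos p] d_Sp[OF apos p]]], of v] S by simp
  finally show ?thesis using S unfolding phi1_def by (simp add: field_simps)
qed


lemma quad_pos: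
  fixes S W T2 ph C1 C2 A1 A2 :: real
  assumes S: "0 < S" and W: "0 < W" and T2: "0 \<le> T2" and ph: "0 < ph"
    and cs: "C1^2 + C2^2 \<le> T2 * W"
  shows "0 < S^2 * W - 2 * S * (C1 * A1 + C2 * A2) + (T2 + S / ph) * (A1^2 + A2^2)"
proof -
  define A where "A = A1^2 + A2^2"
  define D where "D = C1 * A1 + C2 * A2"
  have A0: "0 \<le> A" unfolding A_def by simp
  have D2: "D^2 \<le> (C1^2 + C2^2) * A"
  proof -
    have "(C1^2 + C2^2) * A - D^2 = (C1 * A2 - C2 * A1)^2" unfolding A_def D_def by (simp add: power2_eq_square algebra_simps)
    then show ?thesis using zero_le_power2[of "C1 * A2 - C2 * A1"] by linarith
  qed
  define X where "X = S^2 * W"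
  define Y where "Y = T2 * A"
  have X: "0 < X" unfolding X_def using S W by simp
  have Y: "0 \<le> Y" unfolding Y_def using T2 A0 by simp
  have u2: "(S * D)^2 \<le> X * Y"
  proof -
    have "(S * D)^2 = S^2 * D^2" by (simp add: power_mult_distrib)
    also have "\<dots> \<le> S^2 * ((C1^2 + C2^2) * A)" using D2 by (intro mult_left_mono) auto
    also have "\<dots> \<le> S^2 * ((T2 * W) * A)" using cs A0 by (intro mult_left_mono mult_right_mono) auto
    finally show ?thesis unfolding X_def Y_def by (simp add: algebra_simps)
  qed
  have "(2 * (S * D))^2 \<le> (X + Y)^2"
  proof -
    have "(2 * (S * D))^2 = 4 * (S * D)^2" by (simp add: power2_eq_square)
    also have "\<dots> \<le> 4 * (X * Y)" using u2 by linarith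
    also have "\<dots> \<le> (X + Y)^2"
    proof -
      have "(X + Y)^2 = 4 * (X * Y) + (X - Y)^2" by (simp add: power2_eq_square algebra_simps)
      then show ?thesis using zero_le_power2[of "X - Y"] by linarith
    qed
    finally show ?thesis .
  qed
  then have key: "2 * (S * D) \<le> X + Y" by (rule power2_le_imp_le) (use X Y in linarith)
  show ?thesis
  proof (cases "A = 0")
    case True
    then have "A1^2 = 0" "A2^2 = 0" using zero_le_power2[of A1] zero_le_power2[of A2] unfolding A_def by linarith+
    then have "A1 = 0" "A2 = 0" by simp_all
    then show ?thesis using S W by simp
  next
    case False
    then have a: "0 < S / ph * A" using A0 S ph by simp
    have b: "(T2 + S / ph) * (A1^2 + A2^2) = Y + S / ph * A" unfolding Y_def A_def by (simp add: distrib_right)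
    have c: "S^2 * W - 2 * S * (C1 * A1 + C2 * A2) = X - 2 * (S * D)" unfolding X_def D_def by simp
    show ?thesis unfolding b c using a key by linarith
  qed
qed

lemma cs_sum:
  fixes k t w P V a b :: "'j \<Rightarrow> real"
  assumes fin: "finite I" and nn: "\<And>j. j \<in> I \<Longrightarrow> 0 \<le> k j \<and> 0 \<le> t j \<and> 0 \<le> w j \<and> 0 \<le> P j \<and> 0 \<le> V j"
    and kk: "\<And>j. j \<in> I \<Longrightarrow> (k j)^2 = t j * w j"
    and ab: "\<And>j. j \<in> I \<Longrightarrow> (a j)^2 + (b j)^2 = P j * V j"
  shows "(\<Sum>j\<in>I. k j * a j)^2 + (\<Sum>j\<in>I. k j * b j)^2 \<le> (\<Sum>j\<in>I. t j * P j) * (\<Sum>j\<in>I. w j * V j)"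
proof -
  define z where "z j = complex_of_real (k j) * Complex (a j) (b j)" for j
  have Rez: "Re (\<Sum>j\<in>I. z j) = (\<Sum>j\<in>I. k j * a j)" unfolding z_def by (simp add: Re_sum)
  have Imz: "Im (\<Sum>j\<in>I. z j) = (\<Sum>j\<in>I. k j * b j)" unfolding z_def by (simp add: Im_sum)
  have cz: "cmod (z j) = sqrt (t j * P j) * sqrt (w j * V j)" if j: "j \<in> I" for j
  proof -
    have "cmod (z j) = k j * sqrt ((a j)^2 + (b j)^2)" unfolding z_def norm_mult norm_of_real using nn[OF j]
      by (simp add: complex_norm)
    also have "\<dots> = sqrt ((k j)^2) * sqrt (P j * V j)" using nn[OF j] ab[OF j] by simp
    also have "\<dots> = sqrt (t j * P j) * sqrt (w j * V j)" using kk[OF j]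
      by (simp add: real_sqrt_mult[symmetric] algebra_simps)
    finally show ?thesis .
  qed
  have "(\<Sum>j\<in>I. k j * a j)^2 + (\<Sum>j\<in>I. k j * b j)^2 = (cmod (\<Sum>j\<in>I. z j))^2"
    unfolding cmod_power2 Rez Imz ..
  also have "\<dots> \<le> (\<Sum>j\<in>I. cmod (z j))^2"
    by (intro power_mono norm_sum) simp
  also have "\<dots> = (\<Sum>j\<in>I. sqrt (t j * P j) * sqrt (w j * V j))^2"
    using cz by (metis (no_types, lifting) sum.cong)
  also have "\<dots> \<le> (\<Sum>j\<in>I. (sqrt (t j * P j))^2) * (\<Sum>j\<in>I. (sqrt (w j * V j))^2)"
    by (rule Cauchy_Schwarz_ineq_sum)
  also have "\<dots> = (\<Sum>j\<in>I. t j * P j) * (\<Sum>j\<in>I. w j * V j)"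
  proof -
    have "(\<Sum>j\<in>I. (sqrt (t j * P j))^2) = (\<Sum>j\<in>I. t j * P j)"
      by (intro sum.cong refl) (use nn in auto)
    moreover have "(\<Sum>j\<in>I. (sqrt (w j * V j))^2) = (\<Sum>j\<in>I. w j * V j)"
      by (intro sum.cong refl) (use nn in auto)
    ultimately show ?thesis by simp
  qed
  finally show ?thesis .
qed

lemma lagrange: "(ip p v)^2 + (ip p (\<i> * v))^2 = nsq p * nsq v"
  unfolding ip_def nsq_def by (simp add: power2_eq_square algebra_simps)

lemma ip_self: "ip v v = nsq v" unfolding ip_def nsq_def ..
lemma ip_iself: "ip (\<i> * v) (\<i> * v) = nsq v" unfolding ip_def nsq_def by simp

lemma Jc_nth: "Jc v $ j = \<i> * v $ j" unfolding Jc_def by simp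

lemma levi_pos:
  assumes apos: "\<forall>j. 0 < al j" and p: "p \<noteq> 0" and v: "v \<noteq> 0"
  shows "0 < dd (phi al) [v, v] p + dd (phi al) [Jc v, Jc v] p"
proof -
  define ph where "ph = phi al p"
  define S where "S = Sp al p"
  have ph: "0 < ph" unfolding ph_def using phi_pos[OF apos p] .
  have S: "0 < S" unfolding S_def using Sp_pos[OF apos p] .
  define a where "a j = ip (p $ j) (v $ j)" for j
  define b where "b j = ip (p $ j) (\<i> * v $ j)" for j
  define A1 where "A1 = (\<Sum>j\<in>UNIV. a j * ph powr (- al j))"
  define A2 where "A2 = (\<Sum>j\<in>UNIV. b j * ph powr (- al j))"
  define C1 where "C1 = (\<Sum>j\<in>UNIV. (al j * ph powr (- al j - 1)) * a j)"
  define C2 where "C2 = (\<Sum>j\<in>UNIV. (al j * ph powr (- al j - 1)) * b j)"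
  define W where "W = (\<Sum>j\<in>UNIV. ph powr (- al j) * nsq (v $ j))"
  define T2 where "T2 = (\<Sum>j\<in>UNIV. ((al j)^2 * ph powr (- al j - 2)) * nsq (p $ j))"
  have Pv: "Pp al p v = 2 * A1" unfolding Pp_alt A1_def a_def ph_def sum_distrib_left by (simp add: mult.assoc)
  have PJ: "Pp al p (Jc v) = 2 * A2" unfolding Pp_alt A2_def b_def ph_def sum_distrib_left Jc_nth by (simp add: mult.assoc)
  have Bv: "Bq al p v = 2 * C1" unfolding Bq_def C1_def a_def ph_def sum_distrib_left
    by (intro sum.cong refl) (simp add: algebra_simps)
  have BJ: "Bq al p (Jc v) = 2 * C2" unfolding Bq_def C2_def b_def ph_def sum_distrib_left Jc_nth
    by (intro sum.cong refl) (simp add: algebra_simps)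
  have Wv: "Wq al p v v = 2 * W" unfolding Wq_def W_def ph_def sum_distrib_left ip_self
    by (intro sum.cong refl) (simp add: algebra_simps)
  have WJ: "Wq al p (Jc v) (Jc v) = 2 * W" unfolding Wq_def W_def ph_def sum_distrib_left Jc_nth ip_iself
    by (intro sum.cong refl) (simp add: algebra_simps)
  have TT: "Tq al p = T2 + S / ph"
  proof -
    have "S / ph = (\<Sum>j\<in>UNIV. al j * nsq (p $ j) * ph powr (- al j - 2))"
      unfolding S_def Sp_def ph_def[symmetric] sum_divide_distrib
    proof (intro sum.cong refl)
      fix j
      have e: "- al j - 2 = (- al j - 1) - 1" by simp
      have "ph powr (- al j - 2) = ph powr (- al j - 1) / ph powr 1" unfolding e by (rule powr_diff)
      then have "ph powr (- al j - 2) = ph powr (- al j - 1) / ph" using ph by simp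
      then show "al j * nsq (p $ j) * ph powr (- al j - 1) / ph = al j * nsq (p $ j) * ph powr (- al j - 2)" by simp
    qed
    then show ?thesis unfolding Tq_def T2_def ph_def[symmetric] sum.distrib[symmetric]
      by (simp add: sum.distrib[symmetric] power2_eq_square algebra_simps)
  qed
  have Wpos: "0 < W"
  proof -
    obtain j where j: "v $ j \<noteq> 0" using nz_comp[OF v] by blast
    show ?thesis unfolding W_def
      by (rule sum_pos2[where i=j]) (use ph j in \<open>simp_all add: nsq_pos nsq_ge0\<close>)
  qed
  have T2nn: "0 \<le> T2" unfolding T2_def by (intro sum_nonneg) (simp add: nsq_ge0)
  have cs: "C1^2 + C2^2 \<le> T2 * W"
    unfolding C1_def C2_def T2_def W_def
  proof (rule cs_sum)
    fix j :: 'a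
    show "0 \<le> al j * ph powr (- al j - 1) \<and> 0 \<le> (al j)\<^sup>2 * ph powr (- al j - 2) \<and> 0 \<le> ph powr - al j \<and> 0 \<le> nsq (p $ j) \<and> 0 \<le> nsq (v $ j)"
      using apos ph by (simp add: nsq_ge0 less_imp_le)
    show "(al j * ph powr (- al j - 1))\<^sup>2 = (al j)\<^sup>2 * ph powr (- al j - 2) * ph powr - al j"
    proof -
      have "(ph powr (- al j - 1))^2 = ph powr (- al j - 2) * ph powr - al j"
        unfolding power2_eq_square powr_add[symmetric] by (simp add: algebra_simps)
      then show ?thesis by (simp add: power_mult_distrib)
    qed
    show "(a j)\<^sup>2 + (b j)\<^sup>2 = nsq (p $ j) * nsq (v $ j)" unfolding a_def b_def by (rule lagrange)
  qed simp
  have Q: "0 < S^2 * W - 2 * S * (C1 * A1 + C2 * A2) + (T2 + S / ph) * (A1^2 + A2^2)"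
    by (rule quad_pos[OF S Wpos T2nn ph cs])
  define F1 where "F1 = dd (phi al) [v, v] p"
  define F2 where "F2 = dd (phi al) [Jc v, Jc v] p"
  have f1: "S * F1 = 2 * W - 2 * C1 * (2 * A1 / S) - (2 * A1 / S) * (2 * C1 - Tq al p * (2 * A1 / S))"
    using phi2[OF apos p, of v v] unfolding F1_def S_def[symmetric] phi1_def Pv Bv Wv .
  have f2: "S * F2 = 2 * W - 2 * C2 * (2 * A2 / S) - (2 * A2 / S) * (2 * C2 - Tq al p * (2 * A2 / S))"
    using phi2[OF apos p, of "Jc v" "Jc v"] unfolding F2_def S_def[symmetric] phi1_def PJ BJ WJ .
  have g1: "S^3 * F1 = 2 * W * S^2 - 8 * S * (C1 * A1) + 4 * Tq al p * A1^2"
  proof -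
    have "S^3 * F1 = S^2 * (S * F1)" by (simp add: power3_eq_cube power2_eq_square)
    also have "\<dots> = 2 * W * S^2 - 8 * S * (C1 * A1) + 4 * Tq al p * A1^2"
      unfolding f1 using S by (simp add: field_simps power2_eq_square)
    finally show ?thesis .
  qed
  have g2: "S^3 * F2 = 2 * W * S^2 - 8 * S * (C2 * A2) + 4 * Tq al p * A2^2"
  proof -
    have "S^3 * F2 = S^2 * (S * F2)" by (simp add: power3_eq_cube power2_eq_square)
    also have "\<dots> = 2 * W * S^2 - 8 * S * (C2 * A2) + 4 * Tq al p * A2^2"
      unfolding f2 using S by (simp add: field_simps power2_eq_square)
    finally show ?thesis .
  qed
  have "S^3 * (F1 + F2) = 4 * (S^2 * W - 2 * S * (C1 * A1 + C2 * A2) + Tq al p * (A1^2 + A2^2))"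
    unfolding distrib_left g1 g2 by (simp add: algebra_simps)
  then have "0 < S^3 * (F1 + F2)" using Q unfolding TT by simp
  then show ?thesis unfolding F1_def[symmetric] F2_def[symmetric] using S
    by (simp add: zero_less_mult_iff)
qed


definition Ej :: "'n \<Rightarrow> complex \<Rightarrow> complex^'n" where
  "Ej j z = (\<chi> k. if k = j then z else 0)"

lemma bl_Ej: "bounded_linear (Ej j)"
proof -
  have "linear (Ej j)" unfolding Ej_def
    by (rule linearI) (simp_all add: vec_eq_iff)
  then show ?thesis by (simp add: linear_conv_bounded_linear)
qed

definition Mt :: "('n::finite \<Rightarrow> complex) \<Rightarrow> real \<Rightarrow> complex^'n \<Rightarrow> complex^'n" where
  "Mt k t = diag (\<lambda>j. exp (complex_of_real t * k j))"

lemma Mt_sum: "Mt k t v = (\<Sum>j\<in>UNIV. Ej j (exp (complex_of_real t * k j) * v $ j))"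
  unfolding Mt_def diag_def Ej_def by (simp add: vec_eq_iff)

lemma Mt0: "Mt k 0 v = v" unfolding Mt_def diag_def by (simp add: vec_eq_iff)

lemma Mt_inv: "Mt k t (Mt k (- t) v) = v"
  unfolding Mt_def diag_def by (simp add: vec_eq_iff exp_minus field_simps)

lemma exp_curve: "((\<lambda>t. exp (complex_of_real t * c) * z) has_derivative (\<lambda>h. h *\<^sub>R (c * z))) (at 0)"
proof -
  have "((\<lambda>w. exp (w * c) * z) has_field_derivative (exp (complex_of_real 0 * c) * c * z)) (at (complex_of_real 0))"
    by (auto intro!: derivative_eq_intros)
  from has_vector_derivative_real_field[OF this]
  have "((\<lambda>t. exp (complex_of_real t * c) * z) has_vector_derivative (c * z)) (at 0)" by simp
  then show ?thesis unfolding has_vector_derivative_def .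
qed

lemma curve_deriv: "((\<lambda>t. Mt k t v) has_derivative (\<lambda>h. h *\<^sub>R diag k v)) (at 0)"
proof -
  have "((\<lambda>t. \<Sum>j\<in>UNIV. Ej j (exp (complex_of_real t * k j) * v $ j)) has_derivative
      (\<lambda>h. \<Sum>j\<in>UNIV. Ej j (h *\<^sub>R (k j * v $ j)))) (at 0)"
    by (intro has_derivative_sum bounded_linear.has_derivative[OF bl_Ej] exp_curve)
  moreover have "(\<lambda>h. \<Sum>j\<in>UNIV. Ej j (h *\<^sub>R (k j * v $ j))) = (\<lambda>h. h *\<^sub>R diag k v)"
    unfolding Ej_def diag_def by (simp add: vec_eq_iff fun_eq_iff)
  ultimately show ?thesis unfolding Mt_sum[abs_def] by simp
qed

lemma curve_deriv_neg: "((\<lambda>t. Mt k (- t) v) has_derivative (\<lambda>h. (- h) *\<^sub>R diag k v)) (at 0)"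
proof -
  have m: "((\<lambda>t::real. - t) has_derivative (\<lambda>h. - h)) (at 0)" by (auto intro!: derivative_eq_intros)
  have "((\<lambda>t. Mt k t v) has_derivative (\<lambda>h. h *\<^sub>R diag k v)) (at (- 0))" using curve_deriv by simp
  from has_derivative_compose[OF m this] show ?thesis by (simp add: o_def)
qed

lemma bl_Mt: "bounded_linear (Mt k t)" unfolding Mt_def by (rule bl_diag)

lemma Mt_nz: "q \<noteq> 0 \<Longrightarrow> Mt k t q \<noteq> 0" unfolding Mt_def by (rule diag_nz) simp

lemma phi_bilinear:
  assumes apos: "\<forall>j. 0 < al j" and q: "q \<noteq> 0"
  shows "bilinear (\<lambda>a b. dd (phi al) [a, b] q)"
proof -
  have sm: "smooth_on punctured (phi al)" using phi_smooth[OF apos] .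
  have qU: "q \<in> punctured" using q by (simp add: in_punct)
  have l1: "linear (\<lambda>a. dd (phi al) [a, b] q)" for b using dd_linear1[OF sm qU, of "[b]"] by simp
  have sy: "dd (phi al) [a, b] q = dd (phi al) [b, a] q" for a b using schwarz[OF sm open_punct qU] .
  show ?thesis unfolding bilinear_def using l1 sy by (simp add: sy[of _ b for b])
qed

lemma flow_id2:
  assumes apos: "\<forall>j. 0 < al j" and q: "q \<noteq> 0"
    and hom: "\<And>t q. q \<noteq> 0 \<Longrightarrow> phi al (Mt k t q) = exp (t * \<gamma>) * phi al q"
  shows "dd (phi al) [diag k q, X, Y] q
    = \<gamma> * dd (phi al) [X, Y] q - dd (phi al) [diag k X, Y] q - dd (phi al) [X, diag k Y] q"
proof -
  have sm: "smooth_on punctured (phi al)" using phi_smooth[OF apos] .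
  have qU: "q \<in> punctured" using q by (simp add: in_punct)
  have lc: "dd (phi al) [X, Y] (Mt k t q) = exp (t * \<gamma>) * dd (phi al) [Mt k (- t) X, Mt k (- t) Y] q" for t
  proof -
    have "dd (phi al) (map (Mt k t) [Mt k (- t) X, Mt k (- t) Y]) (Mt k t q)
        = exp (t * \<gamma>) * dd (phi al) [Mt k (- t) X, Mt k (- t) Y] q"
      by (rule dd_lincomp[OF sm open_punct bl_Mt _ _ qU]) (auto simp: in_punct Mt_nz hom)
    then show ?thesis by (simp add: Mt_inv)
  qed
  define B where "B a b = dd (phi al) [a, b] q" for a b
  have bb: "bounded_bilinear B" unfolding B_def
    using phi_bilinear[OF apos q] bilinear_conv_bounded_bilinear by blast
  have dq: "(dd (phi al) [X, Y] has_derivative frechet_derivative (dd (phi al) [X, Y]) (at q)) (at (Mt k 0 q))"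
    using smooth_diff[OF sm qU] frechet_derivative_works Mt0 by metis
  have lin: "linear (frechet_derivative (dd (phi al) [X, Y]) (at q))"
    using linear_frechet_derivative[OF smooth_diff[OF sm qU]] .
  have d1: "((\<lambda>t. dd (phi al) [X, Y] (Mt k t q)) has_derivative
      (\<lambda>h. h * dd (phi al) [diag k q, X, Y] q)) (at 0)"
  proof -
    have "((\<lambda>t. dd (phi al) [X, Y] (Mt k t q)) has_derivative
      (\<lambda>h. frechet_derivative (dd (phi al) [X, Y]) (at q) (h *\<^sub>R diag k q))) (at 0)"
      using has_derivative_compose[OF curve_deriv dq] by (simp add: o_def)
    moreover have "(\<lambda>h. frechet_derivative (dd (phi al) [X, Y]) (at q) (h *\<^sub>R diag k q))
        = (\<lambda>h. h * dd (phi al) [diag k q, X, Y] q)"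
      using linear_scale[OF lin] by (simp add: fun_eq_iff)
    ultimately show ?thesis by simp
  qed
  have de: "((\<lambda>t::real. exp (t * \<gamma>)) has_derivative (\<lambda>h. exp (0 * \<gamma>) * (h * \<gamma>))) (at 0)"
    by (auto intro!: derivative_eq_intros)
  have db: "((\<lambda>t. B (Mt k (- t) X) (Mt k (- t) Y)) has_derivative
     (\<lambda>h. B (Mt k (- 0) X) ((- h) *\<^sub>R diag k Y) + B ((- h) *\<^sub>R diag k X) (Mt k (- 0) Y))) (at 0)"
    by (rule bounded_bilinear.FDERIV[OF bb curve_deriv_neg curve_deriv_neg])
  have d2: "((\<lambda>t. exp (t * \<gamma>) * B (Mt k (- t) X) (Mt k (- t) Y)) has_derivative
     (\<lambda>h. exp (0 * \<gamma>) * (B (Mt k (- 0) X) ((- h) *\<^sub>R diag k Y) + B ((- h) *\<^sub>R diag k X) (Mt k (- 0) Y))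
        + exp (0 * \<gamma>) * (h * \<gamma>) * B (Mt k (- 0) X) (Mt k (- 0) Y))) (at 0)"
    using has_derivative_mult[OF de db] by simp
  have eqf: "(\<lambda>t. dd (phi al) [X, Y] (Mt k t q)) = (\<lambda>t. exp (t * \<gamma>) * B (Mt k (- t) X) (Mt k (- t) Y))"
    unfolding B_def using lc by (simp add: fun_eq_iff)
  have "(\<lambda>h. h * dd (phi al) [diag k q, X, Y] q) =
      (\<lambda>h. exp (0 * \<gamma>) * (B (Mt k (- 0) X) ((- h) *\<^sub>R diag k Y) + B ((- h) *\<^sub>R diag k X) (Mt k (- 0) Y))
        + exp (0 * \<gamma>) * (h * \<gamma>) * B (Mt k (- 0) X) (Mt k (- 0) Y))"
    by (rule has_derivative_unique[OF d1 d2[folded eqf]])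
  from fun_cong[OF this, of 1]
  have "dd (phi al) [diag k q, X, Y] q = B X (- diag k Y) + B (- diag k X) Y + \<gamma> * B X Y"
    by (simp add: Mt0)
  also have "\<dots> = \<gamma> * B X Y - B (diag k X) Y - B X (diag k Y)"
    using bounded_bilinear.minus_left[OF bb] bounded_bilinear.minus_right[OF bb] by simp
  finally show ?thesis unfolding B_def .
qed

lemma flow_id1:
  assumes apos: "\<forall>j. 0 < al j" and q: "q \<noteq> 0"
    and hom: "\<And>t q. q \<noteq> 0 \<Longrightarrow> phi al (Mt k t q) = exp (t * \<gamma>) * phi al q"
  shows "dd (phi al) [diag k q, Y] q = \<gamma> * dd (phi al) [Y] q - dd (phi al) [diag k Y] q"
proof -
  have sm: "smooth_on punctured (phi al)" using phi_smooth[OF apos] .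
  have qU: "q \<in> punctured" using q by (simp add: in_punct)
  have lc: "dd (phi al) [Y] (Mt k t q) = exp (t * \<gamma>) * dd (phi al) [Mt k (- t) Y] q" for t
  proof -
    have "dd (phi al) (map (Mt k t) [Mt k (- t) Y]) (Mt k t q)
        = exp (t * \<gamma>) * dd (phi al) [Mt k (- t) Y] q"
      by (rule dd_lincomp[OF sm open_punct bl_Mt _ _ qU]) (auto simp: in_punct Mt_nz hom)
    then show ?thesis by (simp add: Mt_inv)
  qed
  define L where "L a = dd (phi al) [a] q" for a
  have bl: "bounded_linear L" unfolding L_def
    using dd_linear1[OF sm qU, of "[]"] linear_conv_bounded_linear by auto
  have dq: "(dd (phi al) [Y] has_derivative frechet_derivative (dd (phi al) [Y]) (at q)) (at (Mt k 0 q))"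
    using smooth_diff[OF sm qU] frechet_derivative_works Mt0 by metis
  have lin: "linear (frechet_derivative (dd (phi al) [Y]) (at q))"
    using linear_frechet_derivative[OF smooth_diff[OF sm qU]] .
  have d1: "((\<lambda>t. dd (phi al) [Y] (Mt k t q)) has_derivative
      (\<lambda>h. h * dd (phi al) [diag k q, Y] q)) (at 0)"
  proof -
    have "((\<lambda>t. dd (phi al) [Y] (Mt k t q)) has_derivative
      (\<lambda>h. frechet_derivative (dd (phi al) [Y]) (at q) (h *\<^sub>R diag k q))) (at 0)"
      using has_derivative_compose[OF curve_deriv dq] by (simp add: o_def)
    moreover have "(\<lambda>h. frechet_derivative (dd (phi al) [Y]) (at q) (h *\<^sub>R diag k q))
        = (\<lambda>h. h * dd (phi al) [diag k q, Y] q)"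
      using linear_scale[OF lin] by (simp add: fun_eq_iff)
    ultimately show ?thesis by simp
  qed
  have de: "((\<lambda>t::real. exp (t * \<gamma>)) has_derivative (\<lambda>h. exp (0 * \<gamma>) * (h * \<gamma>))) (at 0)"
    by (auto intro!: derivative_eq_intros)
  have db: "((\<lambda>t. L (Mt k (- t) Y)) has_derivative (\<lambda>h. L ((- h) *\<^sub>R diag k Y))) (at 0)"
    by (rule bounded_linear.has_derivative[OF bl curve_deriv_neg])
  have d2: "((\<lambda>t. exp (t * \<gamma>) * L (Mt k (- t) Y)) has_derivative
     (\<lambda>h. exp (0 * \<gamma>) * L ((- h) *\<^sub>R diag k Y) + exp (0 * \<gamma>) * (h * \<gamma>) * L (Mt k (- 0) Y))) (at 0)"
    using has_derivative_mult[OF de db] by simp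
  have eqf: "(\<lambda>t. dd (phi al) [Y] (Mt k t q)) = (\<lambda>t. exp (t * \<gamma>) * L (Mt k (- t) Y))"
    unfolding L_def using lc by (simp add: fun_eq_iff)
  have "(\<lambda>h. h * dd (phi al) [diag k q, Y] q) =
      (\<lambda>h. exp (0 * \<gamma>) * L ((- h) *\<^sub>R diag k Y) + exp (0 * \<gamma>) * (h * \<gamma>) * L (Mt k (- 0) Y))"
    by (rule has_derivative_unique[OF d1 d2[folded eqf]])
  from fun_cong[OF this, of 1]
  have "dd (phi al) [diag k q, Y] q = L (- diag k Y) + \<gamma> * L Y"
    by (simp add: Mt0)
  also have "\<dots> = \<gamma> * L Y - L (diag k Y)"
    using linear_neg[OF bounded_linear.linear[OF bl]] by simp
  finally show ?thesis unfolding L_def .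
qed


lemma dd_hasderiv:
  assumes "smooth_on U f" "p \<in> U"
  shows "(dd f vs has_derivative (\<lambda>X. dd f (X # vs) p)) (at p)"
  using smooth_diff[OF assms] frechet_derivative_works by fastforce

lemma Jc_diag: "Jc = diag (\<lambda>j. \<i>)" unfolding Jc_def diag_def by (simp add: fun_eq_iff)
lemma hopf_diag: "hopf_gen lam = diag (\<lambda>j. lam $ j)" unfolding hopf_gen_def diag_def by (simp add: fun_eq_iff)

lemma linear_Jc: "linear Jc" unfolding Jc_diag using bl_diag bounded_linear.linear by blast
lemma JJ: "Jc (Jc v) = - v" unfolding Jc_def by (simp add: vec_eq_iff)
lemma J_hopf: "Jc (hopf_gen lam v) = hopf_gen lam (Jc v)" unfolding Jc_def hopf_gen_def by (simp add: vec_eq_iff)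
lemma J_diag: "Jc (diag k v) = diag k (Jc v)" unfolding Jc_def diag_def by (simp add: vec_eq_iff)
lemma J_diag2: "Jc (diag k v) = diag (\<lambda>j. \<i> * k j) v" unfolding Jc_def diag_def by (simp add: vec_eq_iff)
lemma diag_neg: "diag k (- v) = - diag k v" unfolding diag_def by (simp add: vec_eq_iff)

locale hopfL =
  fixes al :: "'n::finite \<Rightarrow> real"
  assumes apos: "\<forall>j. 0 < al j"
begin

definition kL :: "'n \<Rightarrow> complex" where "kL j = complex_of_real (al j)"
definition kR :: "'n \<Rightarrow> complex" where "kR j = \<i> * complex_of_real (al j)"

lemma kR_J: "diag kR v = Jc (diag kL v)" unfolding kR_def kL_def Jc_def diag_def by (simp add: vec_eq_iff)
lemma ii: "\<i> * c * (\<i> * x) = - (c * x)" by (simp add: mult.commute mult.left_commute)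
lemma kR_JJ: "diag kR (Jc v) = - diag kL v" unfolding kR_def kL_def Jc_def diag_def by (simp add: vec_eq_iff ii)

lemma homL: "q \<noteq> 0 \<Longrightarrow> phi al (Mt kL t q) = exp (t * 2) * phi al q"
proof -
  assume q: "q \<noteq> 0"
  have "phi al (diag (\<lambda>j. exp (complex_of_real t * kL j)) q) = (exp t)^2 * phi al q"
  proof (rule phi_hom[OF apos q])
    fix j
    have "exp (complex_of_real t * kL j) = complex_of_real (exp (t * al j))"
      unfolding kL_def of_real_mult[symmetric] exp_of_real ..
    then show "cmod (exp (complex_of_real t * kL j)) = exp t powr al j"
      by (simp add: powr_def)
  qed simp
  then show ?thesis unfolding Mt_def by (simp add: exp_double[symmetric] power2_eq_square exp_add[symmetric] mult.commute)
qed

lemma homR: "q \<noteq> 0 \<Longrightarrow> phi al (Mt kR t q) = exp (t * 0) * phi al q"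
proof -
  assume q: "q \<noteq> 0"
  have "phi al (diag (\<lambda>j. exp (complex_of_real t * kR j)) q) = 1^2 * phi al q"
  proof (rule phi_hom[OF apos q])
    fix j
    have "complex_of_real t * kR j = \<i> * complex_of_real (t * al j)" unfolding kR_def by simp
    then show "cmod (exp (complex_of_real t * kR j)) = 1 powr al j"
      by (simp only: norm_exp_i_times) simp
  qed simp
  then show ?thesis unfolding Mt_def by simp
qed

lemma homG:
  assumes lam: "\<forall>i. 0 < norm (lam $ i) \<and> norm (lam $ i) < 1"
    and aldef: "\<And>j. al j = - ln (cmod (lam $ j))"
    and q: "q \<noteq> 0"
  shows "phi al (hopf_gen lam q) = exp (- 1) ^ 2 * phi al q"
  unfolding hopf_diag
proof (rule phi_hom[OF apos q])
  fix j
  have "exp (-1) powr al j = exp (- al j)" by (simp add: powr_def)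
  also have "\<dots> = cmod (lam $ j)" unfolding aldef using lam by simp
  finally show "cmod (lam $ j) = exp (- 1) powr al j" by simp
qed simp


definition gH :: "complex^'n \<Rightarrow> complex^'n \<Rightarrow> complex^'n \<Rightarrow> real" where
  "gH p v w = (dd (phi al) [v, w] p + dd (phi al) [Jc v, Jc w] p) / phi al p"

definition thH :: "complex^'n \<Rightarrow> complex^'n \<Rightarrow> real" where
  "thH p v = - dd (phi al) [v] p / phi al p"

lemma sm: "smooth_on punctured (phi al)" using phi_smooth[OF apos] .

lemma pU: "p \<noteq> 0 \<Longrightarrow> p \<in> punctured" by (simp add: in_punct)

lemma bil: "p \<noteq> 0 \<Longrightarrow> bilinear (\<lambda>a b. dd (phi al) [a, b] p)" using phi_bilinear[OF apos] .

lemma sym2: "p \<noteq> 0 \<Longrightarrow> dd (phi al) [a, b] p = dd (phi al) [b, a] p"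
  using schwarz[OF sm open_punct pU] .

lemma T23: "p \<noteq> 0 \<Longrightarrow> dd (phi al) [x, a, b] p = dd (phi al) [x, b, a] p"
proof -
  assume p: "p \<noteq> 0"
  have "frechet_derivative (dd (phi al) [a, b]) (at p) = frechet_derivative (dd (phi al) [b, a]) (at p)"
    by (rule fd_local[OF open_punct pU[OF p]]) (metis sym2 in_punct)
  then show ?thesis by simp
qed

lemma T12: "p \<noteq> 0 \<Longrightarrow> dd (phi al) [x, a, b] p = dd (phi al) [a, x, b] p"
proof -
  assume p: "p \<noteq> 0"
  have "dd (dd (phi al) [b]) [x, a] p = dd (dd (phi al) [b]) [a, x] p"
    by (rule schwarz[OF smooth_dd[OF sm] open_punct pU[OF p]])
  then show ?thesis using dd_append[of "phi al" "[x, a]" "[b]"] dd_append[of "phi al" "[a, x]" "[b]"] by simp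
qed

lemma T1lin: "p \<noteq> 0 \<Longrightarrow> linear (\<lambda>x. dd (phi al) [x, a, b] p)"
  using dd_linear1[OF sm pU, of _ "[a, b]"] by simp

lemma T_neg3: "p \<noteq> 0 \<Longrightarrow> dd (phi al) [x, a, - b] p = - dd (phi al) [x, a, b] p"
proof -
  assume p: "p \<noteq> 0"
  have "dd (phi al) [x, a, - b] p = dd (phi al) [- b, x, a] p" using T23[OF p] T12[OF p] by metis
  also have "\<dots> = - dd (phi al) [b, x, a] p" using linear_neg[OF T1lin[OF p]] by simp
  also have "\<dots> = - dd (phi al) [x, a, b] p" using T23[OF p] T12[OF p] by metis
  finally show ?thesis .
qed

lemma g_bilinear: "p \<noteq> 0 \<Longrightarrow> bilinear (gH p)"
proof -
  assume p: "p \<noteq> 0"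
  note b = bil[OF p]
  have lJ: "linear Jc" by (rule linear_Jc)
  show ?thesis unfolding bilinear_def gH_def
  proof (intro allI conjI)
    fix x
    show "linear (\<lambda>y. (dd (phi al) [x, y] p + dd (phi al) [Jc x, Jc y] p) / phi al p)"
      by (rule linearI) (simp_all add: bilinear_radd[OF b] bilinear_rmul[OF b] linear_add[OF lJ] linear_scale[OF lJ] add_divide_distrib algebra_simps del: dd.simps)
    fix y
    show "linear (\<lambda>x. (dd (phi al) [x, y] p + dd (phi al) [Jc x, Jc y] p) / phi al p)"
      by (rule linearI) (simp_all add: bilinear_ladd[OF b] bilinear_lmul[OF b] linear_add[OF lJ] linear_scale[OF lJ] add_divide_distrib algebra_simps del: dd.simps)
  qed
qed

lemma g_sym: "p \<noteq> 0 \<Longrightarrow> gH p v w = gH p w v"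
  unfolding gH_def using sym2 by metis

lemma g_pos: "p \<noteq> 0 \<Longrightarrow> v \<noteq> 0 \<Longrightarrow> 0 < gH p v v"
  unfolding gH_def using levi_pos[OF apos] phi_pos[OF apos] by simp

lemma g_J: "p \<noteq> 0 \<Longrightarrow> gH p (Jc v) (Jc w) = gH p v w"
  unfolding gH_def JJ using bilinear_lneg[OF bil] bilinear_rneg[OF bil] by (simp add: add.commute)


end


context hopfL begin

lemma bl_hopf: "bounded_linear (hopf_gen lam)" unfolding hopf_diag by (rule bl_diag)

lemma hopf_nz: "\<forall>i. 0 < norm (lam $ i) \<and> norm (lam $ i) < 1 \<Longrightarrow> q \<noteq> 0 \<Longrightarrow> hopf_gen lam q \<noteq> 0"
  unfolding hopf_diag by (rule diag_nz) auto

lemma g_G: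
  assumes lam: "\<forall>i. 0 < norm (lam $ i) \<and> norm (lam $ i) < 1"
    and aldef: "\<And>j. al j = - ln (cmod (lam $ j))" and p: "p \<noteq> 0"
  shows "gH (hopf_gen lam p) (hopf_gen lam v) (hopf_gen lam w) = gH p v w"
proof -
  let ?c = "exp (- 1) ^ 2 :: real"
  have lc: "dd (phi al) (map (hopf_gen lam) vs) (hopf_gen lam p) = ?c * dd (phi al) vs p" for vs
    by (rule dd_lincomp[OF sm open_punct bl_hopf _ _ pU[OF p]])
      (auto simp: in_punct hopf_nz[OF lam] homG[OF lam aldef])
  have c: "0 < ?c" by simp
  show ?thesis unfolding gH_def J_hopf
    using lc[of "[v, w]"] lc[of "[Jc v, Jc w]"] homG[OF lam aldef p] c
    by (simp add: distrib_left[symmetric] del: dd.simps)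
qed

lemma th_G:
  assumes lam: "\<forall>i. 0 < norm (lam $ i) \<and> norm (lam $ i) < 1"
    and aldef: "\<And>j. al j = - ln (cmod (lam $ j))" and p: "p \<noteq> 0"
  shows "thH (hopf_gen lam p) (hopf_gen lam v) = thH p v"
proof -
  let ?c = "exp (- 1) ^ 2 :: real"
  have lc: "dd (phi al) (map (hopf_gen lam) vs) (hopf_gen lam p) = ?c * dd (phi al) vs p" for vs
    by (rule dd_lincomp[OF sm open_punct bl_hopf _ _ pU[OF p]])
      (auto simp: in_punct hopf_nz[OF lam] homG[OF lam aldef])
  have c: "0 < ?c" by simp
  show ?thesis unfolding thH_def
    using lc[of "[v]"] homG[OF lam aldef p] c by (simp del: dd.simps)
qed

lemma th_lin: "p \<noteq> 0 \<Longrightarrow> linear (thH p)"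
proof -
  assume p: "p \<noteq> 0"
  have l: "linear (\<lambda>v. dd (phi al) [v] p)" using dd_linear1[OF sm pU[OF p], of "[]"] by simp
  show ?thesis unfolding thH_def
    by (rule linearI) (simp_all add: linear_add[OF l] linear_scale[OF l] add_divide_distrib diff_divide_distrib del: dd.simps)
qed

lemma g_smooth: "smooth_on punctured (\<lambda>p. gH p v w)"
proof -
  obtain h1 where h1: "h1 \<in> KS punctured {phi al}" "\<forall>p\<in>punctured. dd (phi al) [v, w] p = h1 p"
    using KS_ddphi[OF apos] by blast
  obtain h2 where h2: "h2 \<in> KS punctured {phi al}" "\<forall>p\<in>punctured. dd (phi al) [Jc v, Jc w] p = h2 p"
    using KS_ddphi[OF apos] by blast
  have "(\<lambda>p. (h1 p + h2 p) / phi al p) \<in> KS punctured {phi al}"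
    by (rule KS_divide[OF KS.add[OF h1(1) h2(1)] KS.atom]) (auto simp: in_punct phi_pos[OF apos])
  then have "(\<lambda>p. gH p v w) \<in> KS punctured {phi al}"
    by (rule KS.loc) (use h1 h2 in \<open>simp add: gH_def del: dd.simps\<close>)
  then show ?thesis by (rule KS_smooth_phi[OF apos])
qed

lemma th_smooth: "smooth_on punctured (\<lambda>p. thH p v)"
proof -
  obtain h1 where h1: "h1 \<in> KS punctured {phi al}" "\<forall>p\<in>punctured. dd (phi al) [v] p = h1 p"
    using KS_ddphi[OF apos] by blast
  have "(\<lambda>p. (- h1 p) / phi al p) \<in> KS punctured {phi al}"
    by (rule KS_divide[OF KS_scale[OF h1(1), of "-1", simplified] KS.atom]) (auto simp: in_punct phi_pos[OF apos])
  then have "(\<lambda>p. thH p v) \<in> KS punctured {phi al}"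
    by (rule KS.loc) (use h1 in \<open>simp add: thH_def del: dd.simps\<close>)
  then show ?thesis by (rule KS_smooth_phi[OF apos])
qed

lemma phi_hd: "p \<noteq> 0 \<Longrightarrow> (phi al has_derivative (\<lambda>X. dd (phi al) [X] p)) (at p)"
  using dd_hasderiv[OF sm pU, of _ "[]"] by simp

lemma D_quot:
  assumes p: "p \<noteq> 0" and F: "(F has_derivative F') (at p)"
  shows "D (\<lambda>q. F q / phi al q) p X = (F' X * phi al p - F p * dd (phi al) [X] p) / (phi al p * phi al p)"
proof -
  have "((\<lambda>q. F q / phi al q) has_derivative (\<lambda>h. (F' h * phi al p - F p * dd (phi al) [h] p) / (phi al p * phi al p))) (at p)"
    using has_derivative_divide'[OF F phi_hd[OF p]] phi_pos[OF apos p] by simp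
  from fun_cong[OF frechet_derivative_at[OF this], of X] show ?thesis unfolding D_def by simp
qed

lemma D_g:
  assumes p: "p \<noteq> 0"
  shows "D (\<lambda>q. gH q a b) p X = ((dd (phi al) [X, a, b] p + dd (phi al) [X, Jc a, Jc b] p) * phi al p
     - (dd (phi al) [a, b] p + dd (phi al) [Jc a, Jc b] p) * dd (phi al) [X] p) / (phi al p * phi al p)"
  unfolding gH_def
  by (rule D_quot[OF p has_derivative_add[OF dd_hasderiv[OF sm pU[OF p]] dd_hasderiv[OF sm pU[OF p]]]])

lemma D_th:
  assumes p: "p \<noteq> 0"
  shows "D (\<lambda>q. thH q a) p X = ((- dd (phi al) [X, a] p) * phi al p
     - (- dd (phi al) [a] p) * dd (phi al) [X] p) / (phi al p * phi al p)"
  unfolding thH_def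
  by (rule D_quot[OF p has_derivative_minus[OF dd_hasderiv[OF sm pU[OF p]]]])

end


context hopfL begin

lemma closed: "closed_form thH"
  unfolding closed_form_def
proof (intro ballI allI)
  fix p :: "complex^'n" and X Y assume "p \<in> punctured"
  then have p: "p \<noteq> 0" by (simp add: in_punct)
  show "D (\<lambda>q. thH q Y) p X - D (\<lambda>q. thH q X) p Y = 0"
    unfolding D_th[OF p] using sym2[OF p, of X Y] by (simp add: algebra_simps del: dd.simps)
qed

lemma ff_val: "p \<noteq> 0 \<Longrightarrow> fund_form gH p a b = (dd (phi al) [a, Jc b] p - dd (phi al) [Jc a, b] p) / phi al p"
  unfolding fund_form_def gH_def JJ using bilinear_rneg[OF bil] by (simp del: dd.simps)

lemma D_ff: "p \<noteq> 0 \<Longrightarrow> D (\<lambda>q. fund_form gH q a b) p X =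
  ((dd (phi al) [X, a, Jc b] p - dd (phi al) [X, Jc a, b] p) * phi al p
    - (dd (phi al) [a, Jc b] p - dd (phi al) [Jc a, b] p) * dd (phi al) [X] p) / (phi al p * phi al p)"
  unfolding fund_form_def D_g JJ using bilinear_rneg[OF bil] T_neg3 by (simp del: dd.simps)

lemma lck: "lck_equation gH thH"
  unfolding lck_equation_def
proof (intro ballI allI)
  fix p :: "complex^'n" and X Y Z assume "p \<in> punctured"
  then have p: "p \<noteq> 0" by (simp add: in_punct)
  define f where "f = phi al p"
  have f: "0 < f" unfolding f_def using phi_pos[OF apos p] .
  define t1 where "t1 = dd (phi al) [X, Y, Jc Z] p"
  define t2 where "t2 = dd (phi al) [X, Jc Y, Z] p"
  define t3 where "t3 = dd (phi al) [Y, Jc X, Z] p"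
  define b1 where "b1 = dd (phi al) [Y, Jc Z] p - dd (phi al) [Jc Y, Z] p"
  define b2 where "b2 = dd (phi al) [X, Jc Z] p - dd (phi al) [Jc X, Z] p"
  define b3 where "b3 = dd (phi al) [X, Jc Y] p - dd (phi al) [Jc X, Y] p"
  define x1 where "x1 = dd (phi al) [X] p"
  define y1 where "y1 = dd (phi al) [Y] p"
  define z1 where "z1 = dd (phi al) [Z] p"
  have e1: "D (\<lambda>q. fund_form gH q Y Z) p X = ((t1 - t2) * f - b1 * x1) / (f * f)"
    unfolding D_ff[OF p] t1_def t2_def b1_def f_def x1_def ..
  have e2: "D (\<lambda>q. fund_form gH q X Z) p Y = ((t1 - t3) * f - b2 * y1) / (f * f)"
    unfolding D_ff[OF p] t1_def t3_def b2_def f_def y1_def T12[OF p, of Y X] ..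
  have t2': "dd (phi al) [Z, X, Jc Y] p = t2" unfolding t2_def using T12[OF p] T23[OF p] by metis
  have t3': "dd (phi al) [Z, Jc X, Y] p = t3" unfolding t3_def using T12[OF p] T23[OF p] by metis
  have e3: "D (\<lambda>q. fund_form gH q X Y) p Z = ((t2 - t3) * f - b3 * z1) / (f * f)"
    unfolding D_ff[OF p] t2' t3' b3_def f_def z1_def ..
  have v1: "fund_form gH p Y Z = b1 / f" unfolding ff_val[OF p] b1_def f_def ..
  have v2: "fund_form gH p X Z = b2 / f" unfolding ff_val[OF p] b2_def f_def ..
  have v3: "fund_form gH p X Y = b3 / f" unfolding ff_val[OF p] b3_def f_def ..
  have th: "thH p V = - dd (phi al) [V] p / f" for V unfolding thH_def f_def ..
  show "D (\<lambda>q. fund_form gH q Y Z) p X - D (\<lambda>q. fund_form gH q X Z) p Y + D (\<lambda>q. fund_form gH q X Y) p Z =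
    thH p X * fund_form gH p Y Z - thH p Y * fund_form gH p X Z + thH p Z * fund_form gH p X Y"
    unfolding e1 e2 e3 v1 v2 v3 th x1_def[symmetric] y1_def[symmetric] z1_def[symmetric]
    using f by (simp add: field_simps)
qed

end


context hopfL begin

abbreviation "AA \<equiv> diag kL"
abbreviation "RR \<equiv> diag kR"

lemma a1lin: "p \<noteq> 0 \<Longrightarrow> linear (\<lambda>v. dd (phi al) [v] p)"
  using dd_linear1[OF sm pU, of _ "[]"] by simp

lemma E1: "p \<noteq> 0 \<Longrightarrow> dd (phi al) [AA p] p = 2 * phi al p"
proof -
  assume p: "p \<noteq> 0"
  have f: "0 < phi al p" using phi_pos[OF apos p] .
  have "Pp al p (AA p) = 2 * phi al p * Sp al p"
    unfolding Pp_alt Sp_def sum_distrib_left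
  proof (intro sum.cong refl)
    fix j
    have "phi al p * phi al p powr (- al j - 1) = phi al p powr (- al j)"
      using f by (simp add: powr_add[symmetric] powr_one_gt_zero_iff[symmetric] powr_mult_base)
    moreover have "ip (p $ j) (AA p $ j) = al j * nsq (p $ j)"
      unfolding ip_def nsq_def diag_def kL_def by (simp add: algebra_simps)
    ultimately show "2 * ip (p $ j) (AA p $ j) * phi al p powr - al j =
        2 * phi al p * (al j * nsq (p $ j) * phi al p powr (- al j - 1))"
      by (metis (no_types, lifting) mult.assoc mult.left_commute)
  qed
  then show ?thesis using dd1_phi[OF apos p] Sp_pos[OF apos p] by simp
qed

lemma E2': "p \<noteq> 0 \<Longrightarrow> dd (phi al) [AA p, Y] p = 2 * dd (phi al) [Y] p - dd (phi al) [AA Y] p"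
  using flow_id1[OF apos _ homL] by simp

lemma R2': "p \<noteq> 0 \<Longrightarrow> dd (phi al) [RR p, Y] p = - dd (phi al) [RR Y] p"
  using flow_id1[OF apos _ homR] by simp

lemma E2: "p \<noteq> 0 \<Longrightarrow> dd (phi al) [AA p, X, Y] p
    = 2 * dd (phi al) [X, Y] p - dd (phi al) [AA X, Y] p - dd (phi al) [X, AA Y] p"
  using flow_id2[OF apos _ homL] by simp

lemma R3: "p \<noteq> 0 \<Longrightarrow> dd (phi al) [RR p, X, Y] p
    = - dd (phi al) [RR X, Y] p - dd (phi al) [X, RR Y] p"
  using flow_id2[OF apos _ homR] by simp

lemma Gp: "p \<noteq> 0 \<Longrightarrow> dd (phi al) [a, AA p] p + dd (phi al) [Jc a, Jc (AA p)] p = 2 * dd (phi al) [a] p"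
proof -
  assume p: "p \<noteq> 0"
  have "dd (phi al) [a, AA p] p = 2 * dd (phi al) [a] p - dd (phi al) [AA a] p"
    using sym2[OF p] E2'[OF p] by metis
  moreover have "dd (phi al) [Jc a, Jc (AA p)] p = dd (phi al) [AA a] p"
  proof -
    have "dd (phi al) [Jc a, Jc (AA p)] p = dd (phi al) [RR p, Jc a] p" using sym2[OF p] kR_J by metis
    also have "\<dots> = - dd (phi al) [RR (Jc a)] p" by (rule R2'[OF p])
    also have "\<dots> = dd (phi al) [AA a] p" unfolding kR_JJ using linear_neg[OF a1lin[OF p]] by simp
    finally show ?thesis .
  qed
  ultimately show ?thesis by simp
qed

lemma Tp: "p \<noteq> 0 \<Longrightarrow> dd (phi al) [X, a, AA p] p + dd (phi al) [X, Jc a, Jc (AA p)] p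
   = 2 * dd (phi al) [X, a] p - dd (phi al) [AA X, a] p - dd (phi al) [RR X, Jc a] p"
proof -
  assume p: "p \<noteq> 0"
  have perm: "dd (phi al) [x, y, z] p = dd (phi al) [z, x, y] p" for x y z using T12[OF p] T23[OF p] by metis
  have "dd (phi al) [X, a, AA p] p = 2 * dd (phi al) [X, a] p - dd (phi al) [AA X, a] p - dd (phi al) [X, AA a] p"
    using perm E2[OF p] by metis
  moreover have "dd (phi al) [X, Jc a, Jc (AA p)] p = - dd (phi al) [RR X, Jc a] p + dd (phi al) [X, AA a] p"
  proof -
    have "dd (phi al) [X, Jc a, Jc (AA p)] p = dd (phi al) [RR p, X, Jc a] p" using perm kR_J by metis
    also have "\<dots> = - dd (phi al) [RR X, Jc a] p - dd (phi al) [X, RR (Jc a)] p" by (rule R3[OF p])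
    also have "\<dots> = - dd (phi al) [RR X, Jc a] p + dd (phi al) [X, AA a] p"
      unfolding kR_JJ using bilinear_rneg[OF bil[OF p]] by simp
    finally show ?thesis .
  qed
  ultimately show ?thesis by simp
qed


lemma AJ: "AA (Jc v) = RR v" using kR_J J_diag by metis

lemma parallel: "parallel_form gH thH"
  unfolding parallel_form_def
proof (intro ballI allI impI)
  fix p :: "complex^'n" and X Y N assume "p \<in> punctured" and lc: "levi_civita_at gH p X Y N"
  then have p: "p \<noteq> 0" by (simp add: in_punct)
  define f where "f = phi al p"
  have f: "0 < f" unfolding f_def using phi_pos[OF apos p] .
  define bxy where "bxy = dd (phi al) [X, Y] p"
  define u where "u = dd (phi al) [AA X, Y] p"
  define w where "w = dd (phi al) [X, AA Y] p"
  define r1 where "r1 = dd (phi al) [RR X, Jc Y] p"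
  define r2 where "r2 = dd (phi al) [Jc X, RR Y] p"
  define jj where "jj = dd (phi al) [Jc X, Jc Y] p"
  define x1 where "x1 = dd (phi al) [X] p"
  define y1 where "y1 = dd (phi al) [Y] p"
  define n1 where "n1 = dd (phi al) [N] p"
  have kz: "2 * gH p N (AA p) = D (\<lambda>q. gH q Y (AA p)) p X + D (\<lambda>q. gH q X (AA p)) p Y - D (\<lambda>q. gH q X Y) p (AA p)"
    using lc unfolding levi_civita_at_def by blast
  have gN: "gH p N (AA p) = 2 * n1 / f" unfolding gH_def Gp[OF p] n1_def f_def ..
  have K1: "D (\<lambda>q. gH q Y (AA p)) p X = ((2 * bxy - u - r1) * f - 2 * y1 * x1) / (f * f)"
    unfolding D_g[OF p] Tp[OF p] Gp[OF p] bxy_def u_def r1_def f_def x1_def y1_def ..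
  have K2: "D (\<lambda>q. gH q X (AA p)) p Y = ((2 * bxy - w - r2) * f - 2 * x1 * y1) / (f * f)"
  proof -
    have "dd (phi al) [Y, X] p = bxy" unfolding bxy_def using sym2[OF p] by metis
    moreover have "dd (phi al) [AA Y, X] p = w" unfolding w_def using sym2[OF p] by metis
    moreover have "dd (phi al) [RR Y, Jc X] p = r2" unfolding r2_def using sym2[OF p] by metis
    ultimately show ?thesis
      unfolding D_g[OF p] Tp[OF p] Gp[OF p] f_def x1_def y1_def by simp
  qed
  have K3: "D (\<lambda>q. gH q X Y) p (AA p) = ((2 * bxy - u - w + (2 * jj - r1 - r2)) * f - (bxy + jj) * (2 * f)) / (f * f)"
    unfolding D_g[OF p] E2[OF p] E1[OF p] AJ bxy_def u_def w_def r1_def r2_def jj_def f_def ..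
  have "2 * (2 * n1 / f) = ((2 * bxy - u - r1) * f - 2 * y1 * x1) / (f * f) + ((2 * bxy - w - r2) * f - 2 * x1 * y1) / (f * f)
      - ((2 * bxy - u - w + (2 * jj - r1 - r2)) * f - (bxy + jj) * (2 * f)) / (f * f)"
    using kz unfolding gN K1 K2 K3 .
  then have H: "f * (f * (f * (f * (f * (n1 * 4))))) + f * (f * (f * (f * (x1 * (y1 * 4))))) = bxy * (f * (f * (f * (f * (f * 4)))))"
    using f by (simp add: field_simps)
  have "(f * f * f * f * 4) * (f * n1 + x1 * y1) = (f * f * f * f * 4) * (bxy * f)" using H by (simp add: algebra_simps)
  then have "f * n1 + x1 * y1 = bxy * f" using f by simp
  then have key: "n1 * f = bxy * f - x1 * y1" by (simp add: algebra_simps)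
  have "D (\<lambda>q. thH q Y) p X - thH p N = ((- bxy) * f - (- y1) * x1) / (f * f) - (- n1 / f)"
    unfolding D_th[OF p] unfolding thH_def bxy_def y1_def x1_def n1_def f_def ..
  also have "\<dots> = 0" using key f by (simp add: field_simps)
  finally show "D (\<lambda>q. thH q Y) p X - thH p N = 0" .
qed

end


theorem theoremB:
  fixes lam :: "complex^'n::{finite,linorder}"
  assumes "CARD('n) \<ge> 2"
    and "\<forall>i. 0 < norm (lam $ i) \<and> norm (lam $ i) < 1"
    and "\<forall>i j. i \<le> j \<longrightarrow> norm (lam $ j) \<le> norm (lam $ i)"
  shows "lck_metric_parallel_lee_on_hopf lam"
proof -
  define al where "al j = - ln (cmod (lam $ j))" for j
  have apos: "\<forall>j. 0 < al j" unfolding al_def using assms(2) by simp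
  interpret H: hopfL al by (unfold_locales) (rule apos)
  have aldef: "\<And>j. al j = - ln (cmod (lam $ j))" unfolding al_def ..
  have herm: "hermitian_metric_hopf lam H.gH"
    unfolding hermitian_metric_hopf_def
  proof (intro conjI ballI allI impI)
    fix p :: "complex^'n::{finite,linorder}" assume "p \<in> punctured"
    then have p: "p \<noteq> 0" by (simp add: in_punct)
    show "bilinear (H.gH p)" by (rule H.g_bilinear[OF p])
    show "\<And>v w. H.gH p v w = H.gH p w v" by (rule H.g_sym[OF p])
    show "\<And>v. v \<noteq> 0 \<Longrightarrow> 0 < H.gH p v v" by (rule H.g_pos[OF p])
    show "\<And>v w. H.gH p (Jc v) (Jc w) = H.gH p v w" by (rule H.g_J[OF p])
    show "\<And>v w. H.gH (hopf_gen lam p) (hopf_gen lam v) (hopf_gen lam w) = H.gH p v w"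
      by (rule H.g_G[OF assms(2) aldef p])
  next
    fix v w show "smooth_on punctured (\<lambda>p. H.gH p v w)" by (rule H.g_smooth)
  qed
  have oneform: "one_form_hopf lam H.thH"
    unfolding one_form_hopf_def
  proof (intro conjI ballI allI)
    fix p :: "complex^'n::{finite,linorder}" assume "p \<in> punctured"
    then have p: "p \<noteq> 0" by (simp add: in_punct)
    show "linear (H.thH p)" by (rule H.th_lin[OF p])
    fix v show "H.thH (hopf_gen lam p) (hopf_gen lam v) = H.thH p v" by (rule H.th_G[OF assms(2) aldef p])
  next
    fix v show "smooth_on punctured (\<lambda>p. H.thH p v)" by (rule H.th_smooth)
  qed
  show ?thesis unfolding lck_metric_parallel_lee_on_hopf_def
    using herm oneform H.closed H.lck H.parallel by blast
qed


end
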